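(* Let $(u,v)\in F^2$ with $(u,v)\sim_{AC}\mathrm{AK}(3)$, where $\mathrm{AK}(3)=(xyxy^{-1}x^{-1}y^{-1},\ x^3y^{-4})$. Then $(\varphi(u),\varphi(v))\sim_{AC}\mathrm{AK}(3)$ for every $\varphi\in\mathrm{Aut}(F)$.
   Context: $F=F(x,y)$ is the free group on $\{x,y\}$. $\mathrm{AK}(3)$ is the pair corresponding to the presentation $\langle x,y\mid xyx=yxy,\ x^3=y^4\rangle$. The Andrews–Curtis (AC) moves on a pair $(r_1,r_2)\in F^2$ are: replace $r_i$ by $r_ir_j$ ($i\ne j$); replace $r_i$ by $r_i^{-1}$; replace $r_i$ by $w^{-1}r_iw$ for some $w\in F$. Two pairs are AC-equivalent, $\sim_{AC}$, if one can be obtained from the other by a finite sequence of AC-moves. *)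

theory Defs
  imports "HOL-Algebra.Group"
begin

text \<open>The free group F = F(x,y), realised as freely reduced words over the
letters x, y and their inverses.  A letter is a pair (generator, inverted?).\<close>

datatype gen = X | Y

type_synonym letter = "gen \<times> bool"
type_synonym word = "letter list"

definition inverse_letters :: "letter \<Rightarrow> letter \<Rightarrow> bool" where
  "inverse_letters a b \<longleftrightarrow> fst a = fst b \<and> snd a \<noteq> snd b"

definition reduced :: "word \<Rightarrow> bool" where
  "reduced w \<longleftrightarrow> (\<forall>i. Suc i < length w \<longrightarrow> \<not> inverse_letters (w ! i) (w ! Suc i))"

fun push :: "letter \<Rightarrow> word \<Rightarrow> word" where
  "push a [] = [a]"
| "push a (b # bs) = (if inverse_letters a b then bs else a # b # bs)"

definition reduce :: "word \<Rightarrow> word" where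
  "reduce w = foldr push w []"

definition FG :: "word monoid" where
  "FG = \<lparr>carrier = {w. reduced w}, mult = (\<lambda>u v. reduce (u @ v)), one = []\<rparr>"

definition winv :: "word \<Rightarrow> word" where
  "winv w = rev (map (\<lambda>(g, b). (g, \<not> b)) w)"

definition wmult :: "word \<Rightarrow> word \<Rightarrow> word" where
  "wmult u v = reduce (u @ v)"

inductive ac_move :: "word \<times> word \<Rightarrow> word \<times> word \<Rightarrow> bool" where
  mult1: "ac_move (r1, r2) (wmult r1 r2, r2)"
| mult2: "ac_move (r1, r2) (r1, wmult r2 r1)"
| inv1:  "ac_move (r1, r2) (winv r1, r2)"
| inv2:  "ac_move (r1, r2) (r1, winv r2)"
| conj1: "reduced w \<Longrightarrow> ac_move (r1, r2) (wmult (wmult (winv w) r1) w, r2)"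
| conj2: "reduced w \<Longrightarrow> ac_move (r1, r2) (r1, wmult (wmult (winv w) r2) w)"

definition ac_equiv :: "word \<times> word \<Rightarrow> word \<times> word \<Rightarrow> bool" where
  "ac_equiv p q \<longleftrightarrow> ac_move\<^sup>*\<^sup>* p q"

abbreviation "lx \<equiv> (X, False)"
abbreviation "ly \<equiv> (Y, False)"
abbreviation "lxi \<equiv> (X, True)"
abbreviation "lyi \<equiv> (Y, True)"

definition AK3 :: "word \<times> word" where
  "AK3 = ([lx, ly, lx, lyi, lxi, lyi], [lx, lx, lx, lyi, lyi, lyi, lyi])"

end

theory Submission
  imports Defs
begin

definition inv_l :: "letter \<Rightarrow> letter" where "inv_l l = (fst l, \<not> snd l)"

lemma inv_inv_l[simp]: "inv_l (inv_l l) = l" by (cases l) (simp add: inv_l_def)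

lemma inverse_letters_iff: "inverse_letters a b \<longleftrightarrow> b = inv_l a"
  by (cases a; cases b) (auto simp: inverse_letters_def inv_l_def)

lemma inverse_letters_sym: "inverse_letters a b \<longleftrightarrow> inverse_letters b a"
  by (auto simp: inverse_letters_def)

lemma reduced_Nil[simp]: "reduced []" by (simp add: reduced_def)
lemma reduced_single[simp]: "reduced [a]" by (simp add: reduced_def)
lemma reduced_Cons2[simp]: "reduced (a # b # w) \<longleftrightarrow> \<not> inverse_letters a b \<and> reduced (b # w)"
proof
  assume r: "reduced (a # b # w)"
  have "\<not> inverse_letters a b" using r[unfolded reduced_def, rule_format, of 0] by simp
  moreover have "reduced (b # w)" unfolding reduced_def
  proof (intro allI impI)
    fix i assume "Suc i < length (b # w)"
    thus "\<not> inverse_letters ((b # w) ! i) ((b # w) ! Suc i)"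
      using r[unfolded reduced_def, rule_format, of "Suc i"] by simp
  qed
  ultimately show "\<not> inverse_letters a b \<and> reduced (b # w)" ..
next
  assume h: "\<not> inverse_letters a b \<and> reduced (b # w)"
  show "reduced (a # b # w)" unfolding reduced_def
  proof (intro allI impI)
    fix i assume i: "Suc i < length (a # b # w)"
    show "\<not> inverse_letters ((a # b # w) ! i) ((a # b # w) ! Suc i)"
    proof (cases i)
      case 0 thus ?thesis using h by simp
    next
      case (Suc j) thus ?thesis using h i unfolding reduced_def by auto
    qed
  qed
qed

lemma reduced_ConsD: "reduced (a # w) \<Longrightarrow> reduced w"
  by (cases w) auto

lemma reduced_push: "reduced w \<Longrightarrow> reduced (push a w)"
  by (cases w) (auto dest: reduced_ConsD)

lemma reduced_foldr_push: "reduced w \<Longrightarrow> reduced (foldr push u w)"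
  by (induction u) (auto intro: reduced_push)

lemma reduced_reduce[simp]: "reduced (reduce w)"
  unfolding reduce_def by (rule reduced_foldr_push) simp

lemma push_reduced_Cons: "reduced (a # w) \<Longrightarrow> push a w = a # w"
  by (cases w) auto

lemma reduce_reduced: "reduced w \<Longrightarrow> reduce w = w"
proof (induction w)
  case Nil thus ?case by (simp add: reduce_def)
next
  case (Cons a w)
  hence "reduce w = w" using reduced_ConsD by blast
  thus ?case using Cons.prems by (simp add: reduce_def push_reduced_Cons)
qed

lemma reduce_Cons: "reduce (a # w) = push a (reduce w)" by (simp add: reduce_def)

lemma push_push_inv: "reduced w \<Longrightarrow> push a (push (inv_l a) w) = w"
proof (cases w)
  case Nil thus ?thesis by (simp add: inverse_letters_iff)
next
  case (Cons b w')
  assume r: "reduced w"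
  show ?thesis
  proof (cases "b = a")
    case True
    have "push a w' = a # w'"
      using r Cons True by (intro push_reduced_Cons) simp
    thus ?thesis using Cons True by (simp add: inverse_letters_iff)
  next
    case False
    thus ?thesis using Cons by (auto simp: inverse_letters_iff)
  qed
qed

lemma reduce_append: "reduce (u @ v) = foldr push u (reduce v)"
  by (simp add: reduce_def)

lemma foldr_push_reduce: "reduced z \<Longrightarrow> foldr push (reduce u) z = foldr push u z"
proof (induction u)
  case Nil thus ?case by (simp add: reduce_def)
next
  case (Cons a u)
  have ru: "reduced (reduce u)" by simp
  have "foldr push (push a (reduce u)) z = push a (foldr push (reduce u) z)"
  proof (cases "reduce u")
    case Nil thus ?thesis by simp
  next
    case (Cons b r)
    show ?thesis
    proof (cases "inverse_letters a b")
      case True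
      hence b: "b = inv_l a" by (simp add: inverse_letters_iff)
      have rr: "reduced r" using ru Cons reduced_ConsD by metis
      have "push a (foldr push (reduce u) z) = push a (push (inv_l a) (foldr push r z))"
        using Cons b by simp
      also have "\<dots> = foldr push r z" using rr Cons.prems
        by (intro push_push_inv reduced_foldr_push)
      finally show ?thesis using Cons True by simp
    next
      case False thus ?thesis using Cons by simp
    qed
  qed
  thus ?case using Cons by (simp add: reduce_def)
qed

lemma reduce_reduce_append: "reduce (reduce u @ v) = reduce (u @ v)"
  by (simp add: reduce_append foldr_push_reduce)

lemma reduce_append_reduce: "reduce (u @ reduce v) = reduce (u @ v)"
  by (simp add: reduce_append reduce_reduced)

lemma reduce_idem[simp]: "reduce (reduce w) = reduce w"
  by (simp add: reduce_reduced)

lemma wmult_assoc: "wmult (wmult u v) w = wmult u (wmult v w)"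
  unfolding wmult_def
  by (metis append_assoc reduce_reduce_append reduce_append_reduce)

lemma reduced_wmult[simp]: "reduced (wmult u v)" by (simp add: wmult_def)

lemma wmult_Nil_left: "reduced w \<Longrightarrow> wmult [] w = w" by (simp add: wmult_def reduce_reduced)
lemma wmult_Nil_right: "reduced w \<Longrightarrow> wmult w [] = w" by (simp add: wmult_def reduce_reduced)

lemma winv_Nil[simp]: "winv [] = []" by (simp add: winv_def)
lemma winv_Cons: "winv (a # w) = winv w @ [inv_l a]"
  by (cases a) (simp add: winv_def inv_l_def)
lemma winv_append: "winv (u @ v) = winv v @ winv u" by (simp add: winv_def)
lemma length_winv[simp]: "length (winv w) = length w" by (simp add: winv_def)
lemma winv_winv[simp]: "winv (winv w) = w"
  unfolding winv_def by (induction w) auto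
lemma winv_single[simp]: "winv [a] = [inv_l a]" by (simp add: winv_Cons)

lemma winv_nth: "i < length w \<Longrightarrow> winv w ! i = inv_l (w ! (length w - Suc i))"
  by (simp add: winv_def rev_nth inv_l_def split: prod.splits)

lemma inverse_letters_inv_l: "inverse_letters (inv_l p) (inv_l q) \<longleftrightarrow> inverse_letters p q"
  by (auto simp: inverse_letters_def inv_l_def)

lemma reduced_winv_imp: "reduced w \<Longrightarrow> reduced (winv w)"
  unfolding reduced_def
proof (intro allI impI)
  fix i assume r: "\<forall>i. Suc i < length w \<longrightarrow> \<not> inverse_letters (w ! i) (w ! Suc i)"
    and i: "Suc i < length (winv w)"
  have "\<not> inverse_letters (w ! (length w - Suc (Suc i))) (w ! Suc (length w - Suc (Suc i)))"
    using r i by simp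
  moreover have "Suc (length w - Suc (Suc i)) = length w - Suc i" using i by simp
  ultimately show "\<not> inverse_letters (winv w ! i) (winv w ! Suc i)"
    using i by (simp add: winv_nth inverse_letters_inv_l inverse_letters_sym)
qed

lemma reduced_winv[simp]: "reduced (winv w) \<longleftrightarrow> reduced w"
  using reduced_winv_imp winv_winv by metis

lemma reduce_w_winv: "reduce (w @ winv w) = []"
proof (induction w)
  case Nil thus ?case by (simp add: reduce_def)
next
  case (Cons a w)
  have "reduce (w @ winv w @ [inv_l a]) = reduce (reduce (w @ winv w) @ [inv_l a])"
    by (metis append_assoc reduce_reduce_append)
  also have "\<dots> = [inv_l a]" using Cons by (simp add: reduce_def)
  finally show ?case by (simp add: winv_Cons reduce_Cons inverse_letters_iff)
qed

lemma reduce_winv_w: "reduce (winv w @ w) = []"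
  using reduce_w_winv[of "winv w"] by simp

lemma wmult_winv_right[simp]: "wmult w (winv w) = []" by (simp add: wmult_def reduce_w_winv)
lemma wmult_winv_left[simp]: "wmult (winv w) w = []" by (simp add: wmult_def reduce_winv_w)

lemma wmult_Nil_left'[simp]: "wmult [] w = reduce w" by (simp add: wmult_def)
lemma wmult_Nil_right'[simp]: "wmult w [] = reduce w" by (simp add: wmult_def)

lemma wmult_reduce_left[simp]: "wmult (reduce u) v = wmult u v" by (simp add: wmult_def reduce_reduce_append)
lemma wmult_reduce_right[simp]: "wmult u (reduce v) = wmult u v" by (simp add: wmult_def reduce_append_reduce)

lemma wmult_cancel1[simp]: "wmult u (wmult (winv u) z) = reduce z"
  by (metis wmult_assoc wmult_winv_right wmult_Nil_left')
lemma wmult_cancel2[simp]: "wmult (winv u) (wmult u z) = reduce z"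
  by (metis wmult_assoc wmult_winv_left wmult_Nil_left')
lemma wmult_cancel3[simp]: "wmult (wmult z u) (winv u) = reduce z"
  by (metis wmult_assoc wmult_winv_right wmult_Nil_right')
lemma wmult_cancel4[simp]: "wmult (wmult z (winv u)) u = reduce z"
  by (metis wmult_assoc wmult_winv_left wmult_Nil_right')

lemma inv_unique: "reduced r \<Longrightarrow> reduced s \<Longrightarrow> wmult r s = [] \<Longrightarrow> s = winv r"
  by (metis wmult_cancel2 wmult_Nil_right' reduce_reduced reduced_winv)

lemma winv_wmult: "winv (wmult u v) = wmult (winv v) (winv u)"
proof -
  have "wmult (wmult u v) (wmult (winv v) (winv u)) = []"
    by (simp add: wmult_assoc)
  thus ?thesis by (metis inv_unique reduced_wmult)
qed

lemma reduce_winv: "reduce (winv w) = winv (reduce w)"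
  using winv_wmult[of w "[]"] by simp

lemma group_FG: "group FG"
proof (rule groupI)
  show "\<one>\<^bsub>FG\<^esub> \<in> carrier FG" by (simp add: FG_def)
  fix x y z assume "x \<in> carrier FG" "y \<in> carrier FG" "z \<in> carrier FG"
  thus "x \<otimes>\<^bsub>FG\<^esub> y \<in> carrier FG"
    "x \<otimes>\<^bsub>FG\<^esub> y \<otimes>\<^bsub>FG\<^esub> z = x \<otimes>\<^bsub>FG\<^esub> (y \<otimes>\<^bsub>FG\<^esub> z)"
    "\<one>\<^bsub>FG\<^esub> \<otimes>\<^bsub>FG\<^esub> x = x"
    using wmult_assoc[unfolded wmult_def]
    by (auto simp: FG_def reduce_reduced)
next
  fix x assume "x \<in> carrier FG"
  thus "\<exists>y\<in>carrier FG. y \<otimes>\<^bsub>FG\<^esub> x = \<one>\<^bsub>FG\<^esub>"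
    by (intro bexI[of _ "winv x"]) (auto simp: FG_def reduce_winv_w)
qed

lemma FG_simps: "carrier FG = {w. reduced w}" "mult FG = wmult" "one FG = []"
  by (auto simp: FG_def wmult_def[abs_def])

lemma inv_FG: "reduced w \<Longrightarrow> inv\<^bsub>FG\<^esub> w = winv w"
  using group.inv_equality[OF group_FG, of "winv w" w] by (simp add: FG_simps)

fun limg :: "word \<Rightarrow> word \<Rightarrow> letter \<Rightarrow> word" where
  "limg a b (X, False) = a"
| "limg a b (X, True) = winv a"
| "limg a b (Y, False) = b"
| "limg a b (Y, True) = winv b"

definition img :: "word \<Rightarrow> word \<Rightarrow> word \<Rightarrow> word" where
  "img a b w = foldr (\<lambda>l acc. wmult (limg a b l) acc) w []"

lemma letter_cases[case_names x xi y yi]: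
  obtains "l = lx" | "l = lxi" | "l = ly" | "l = lyi"
  by (cases l) (metis (full_types) gen.exhaust)

lemma img_Nil[simp]: "img a b [] = []" by (simp add: img_def)
lemma img_Cons: "img a b (l # w) = wmult (limg a b l) (img a b w)" by (simp add: img_def)
lemma reduced_img[simp]: "reduced (img a b w)" by (cases w) (simp_all add: img_Cons)

lemma limg_inv_l: "limg a b (inv_l l) = winv (limg a b l)"
  by (cases l rule: letter_cases) (simp_all add: inv_l_def)

lemma reduced_limg: "reduced a \<Longrightarrow> reduced b \<Longrightarrow> reduced (limg a b l)"
  by (cases l rule: letter_cases) simp_all

lemma img_append: "img a b (u @ v) = wmult (img a b u) (img a b v)"
  by (induction u) (simp_all add: img_Cons wmult_assoc reduce_reduced)

lemma img_push:
  assumes "reduced a" "reduced b" "reduced z"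
  shows "img a b (push l z) = img a b (l # z)"
proof (cases z)
  case Nil thus ?thesis by simp
next
  case (Cons l' z')
  show ?thesis
  proof (cases "inverse_letters l l'")
    case True
    hence "l' = inv_l l" by (simp add: inverse_letters_iff)
    thus ?thesis using Cons True by (simp add: img_Cons limg_inv_l reduce_reduced)
  next
    case False thus ?thesis using Cons by simp
  qed
qed

lemma img_reduce:
  assumes "reduced a" "reduced b"
  shows "img a b (reduce w) = img a b w"
proof (induction w)
  case Nil thus ?case by (simp add: reduce_def)
next
  case (Cons l w)
  have "img a b (reduce (l # w)) = img a b (push l (reduce w))" by (simp add: reduce_Cons)
  also have "\<dots> = img a b (l # reduce w)" using assms by (simp add: img_push)
  also have "\<dots> = img a b (l # w)" using Cons by (simp add: img_Cons)
  finally show ?case .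
qed

lemma img_wmult:
  assumes "reduced a" "reduced b"
  shows "img a b (wmult u v) = wmult (img a b u) (img a b v)"
  using assms by (simp add: wmult_def img_reduce img_append[unfolded wmult_def])

lemma img_winv:
  assumes "reduced a" "reduced b"
  shows "img a b (winv w) = winv (img a b w)"
proof (induction w)
  case Nil thus ?case by simp
next
  case (Cons l w)
  have "img a b (winv (l # w)) = wmult (img a b (winv w)) (img a b [inv_l l])"
    by (simp add: winv_Cons img_append)
  also have "\<dots> = wmult (winv (img a b w)) (winv (limg a b l))"
    using Cons assms by (simp add: img_Cons limg_inv_l reduce_winv reduce_reduced reduced_limg)
  also have "\<dots> = winv (img a b (l # w))" by (simp add: img_Cons winv_wmult)
  finally show ?case .
qed

lemma img_single: "reduced a \<Longrightarrow> reduced b \<Longrightarrow> img a b [l] = limg a b l"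
  by (simp add: img_Cons reduce_reduced reduced_limg)

lemma img_comp:
  assumes "reduced a" "reduced b"
  shows "img a b (img c d w) = img (img a b c) (img a b d) w"
proof (induction w)
  case Nil thus ?case by simp
next
  case (Cons l w)
  have "img a b (limg c d l) = limg (img a b c) (img a b d) l"
    using assms by (cases l rule: letter_cases) (simp_all add: img_winv)
  thus ?case using Cons assms by (simp add: img_Cons img_wmult)
qed

lemma img_id: "img [lx] [ly] w = reduce w"
proof (induction w)
  case Nil thus ?case by (simp add: reduce_def)
next
  case (Cons l w)
  have "limg [lx] [ly] l = [l]" by (cases l rule: letter_cases) (simp_all add: inv_l_def)
  hence "img [lx] [ly] (l # w) = wmult [l] (reduce w)" using Cons by (simp add: img_Cons)
  also have "\<dots> = reduce (l # w)" using reduce_append_reduce[of "[l]" w] by (simp add: wmult_def)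
  finally show ?case .
qed

definition conjw :: "word \<Rightarrow> word \<Rightarrow> word" where
  "conjw w r = wmult (wmult (winv w) r) w"

lemma img_conjw: "reduced a \<Longrightarrow> reduced b \<Longrightarrow> img a b (conjw w r) = conjw (img a b w) (img a b r)"
  by (simp add: conjw_def img_wmult img_winv)

definition imgp :: "word \<Rightarrow> word \<Rightarrow> word \<times> word \<Rightarrow> word \<times> word" where
  "imgp a b p = (img a b (fst p), img a b (snd p))"

lemma ac_move_img:
  assumes "reduced a" "reduced b" "ac_move p q"
  shows "ac_move (imgp a b p) (imgp a b q)"
  using assms(3)
proof cases
  case (mult1 r1 r2) thus ?thesis using assms by (simp add: imgp_def img_wmult ac_move.mult1)
next
  case (mult2 r1 r2) thus ?thesis using assms by (simp add: imgp_def img_wmult ac_move.mult2)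
next
  case (inv1 r1 r2) thus ?thesis using assms by (simp add: imgp_def img_winv ac_move.inv1)
next
  case (inv2 r1 r2) thus ?thesis using assms by (simp add: imgp_def img_winv ac_move.inv2)
next
  case (conj1 w r1 r2) thus ?thesis using assms
    by (simp add: imgp_def img_wmult img_winv ac_move.conj1)
next
  case (conj2 w r1 r2) thus ?thesis using assms
    by (simp add: imgp_def img_wmult img_winv ac_move.conj2)
qed

lemma ac_equiv_img:
  assumes "reduced a" "reduced b" "ac_equiv p q"
  shows "ac_equiv (imgp a b p) (imgp a b q)"
  using assms(3) unfolding ac_equiv_def
proof (induction rule: rtranclp_induct)
  case base thus ?case by simp
next
  case (step y z) thus ?case using ac_move_img[OF assms(1,2)]
    by (meson rtranclp.rtrancl_into_rtrancl)
qed

lemma ac_refl: "ac_equiv p p" by (simp add: ac_equiv_def)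
lemma ac_trans: "ac_equiv p q \<Longrightarrow> ac_equiv q r \<Longrightarrow> ac_equiv p r"
  by (simp add: ac_equiv_def)
lemma ac_step: "ac_move p q \<Longrightarrow> ac_equiv q r \<Longrightarrow> ac_equiv p r"
  by (simp add: ac_equiv_def converse_rtranclp_into_rtranclp)

lemma phi_img:
  assumes phi: "\<phi> \<in> iso FG FG" and w: "reduced w"
  shows "\<phi> w = img (\<phi> [lx]) (\<phi> [ly]) w"
  using w
proof (induction w)
  case Nil
  have "group_hom FG FG \<phi>" using phi group_FG by (simp add: group_hom_def group_hom_axioms_def iso_def)
  hence "\<phi> [] = []" using group_hom.hom_one by (fastforce simp: FG_simps)
  thus ?case by simp
next
  case (Cons l w)
  have gh: "group_hom FG FG \<phi>" using phi group_FG by (simp add: group_hom_def group_hom_axioms_def iso_def)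
  have hom: "\<And>x y. reduced x \<Longrightarrow> reduced y \<Longrightarrow> \<phi> (wmult x y) = wmult (\<phi> x) (\<phi> y)"
    using group_hom.hom_mult[OF gh] by (simp add: FG_simps)
  have car: "\<And>x. reduced x \<Longrightarrow> reduced (\<phi> x)"
    using group_hom.hom_closed[OF gh] by (simp add: FG_simps)
  have hinv: "\<And>x. reduced x \<Longrightarrow> \<phi> (winv x) = winv (\<phi> x)"
    using group_hom.hom_inv[OF gh] by (simp add: FG_simps inv_FG car)
  have rw: "reduced w" using Cons.prems reduced_ConsD by blast
  have "l # w = wmult [l] w" using Cons.prems by (simp add: wmult_def reduce_reduced)
  hence "\<phi> (l # w) = wmult (\<phi> [l]) (\<phi> w)" using hom rw by simp
  moreover have "\<phi> [l] = limg (\<phi> [lx]) (\<phi> [ly]) l"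
  proof (cases l rule: letter_cases)
    case xi thus ?thesis using hinv[of "[lx]"] by (simp add: inv_l_def)
  next
    case yi thus ?thesis using hinv[of "[ly]"] by (simp add: inv_l_def)
  qed simp_all
  ultimately show ?case using Cons.IH rw by (simp add: img_Cons)
qed

lemma S_C1: "reduced g \<Longrightarrow> r1' = conjw g r1 \<Longrightarrow> ac_equiv (r1', r2) q \<Longrightarrow> ac_equiv (r1, r2) q"
  by (rule ac_step[OF ac_move.conj1[of g r1 r2]]) (simp_all add: conjw_def)
lemma S_C2: "reduced g \<Longrightarrow> r2' = conjw g r2 \<Longrightarrow> ac_equiv (r1, r2') q \<Longrightarrow> ac_equiv (r1, r2) q"
  by (rule ac_step[OF ac_move.conj2[of g r1 r2]]) (simp_all add: conjw_def)
lemma S_I1: "ac_equiv (winv r1, r2) q \<Longrightarrow> ac_equiv (r1, r2) q"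
  by (rule ac_step[OF ac_move.inv1])
lemma S_I2: "ac_equiv (r1, winv r2) q \<Longrightarrow> ac_equiv (r1, r2) q"
  by (rule ac_step[OF ac_move.inv2])
lemma S_M1p: "reduced w \<Longrightarrow> reduced g \<Longrightarrow> r1' = conjw g (wmult (conjw w r1) r2) \<Longrightarrow> ac_equiv (r1', r2) q \<Longrightarrow> ac_equiv (r1, r2) q"
  apply (rule S_C1[of w _ r1], assumption, rule refl)
  apply (rule ac_step[OF ac_move.mult1])
  apply (rule S_C1[of g], assumption, rule refl)
  by simp
lemma S_M2p: "reduced w \<Longrightarrow> reduced g \<Longrightarrow> r2' = conjw g (wmult (conjw w r2) r1) \<Longrightarrow> ac_equiv (r1, r2') q \<Longrightarrow> ac_equiv (r1, r2) q"
  apply (rule S_C2[of w _ r2], assumption, rule refl)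
  apply (rule ac_step[OF ac_move.mult2])
  apply (rule S_C2[of g], assumption, rule refl)
  by simp
lemma S_M1m: "reduced w \<Longrightarrow> reduced g \<Longrightarrow> r1' = conjw g (wmult (conjw w r1) (winv r2)) \<Longrightarrow> ac_equiv (r1', r2) q \<Longrightarrow> ac_equiv (r1, r2) q"
  apply (rule S_I2)
  apply (rule S_C1[of w _ r1], assumption, rule refl)
  apply (rule ac_step[OF ac_move.mult1])
  apply (rule S_C1[of g], assumption, rule refl)
  apply (rule S_I2)
  by simp
lemma S_M2m: "reduced w \<Longrightarrow> reduced g \<Longrightarrow> r2' = conjw g (wmult (conjw w r2) (winv r1)) \<Longrightarrow> ac_equiv (r1, r2') q \<Longrightarrow> ac_equiv (r1, r2) q"
  apply (rule S_I1)
  apply (rule S_C2[of w _ r2], assumption, rule refl)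
  apply (rule ac_step[OF ac_move.mult2])
  apply (rule S_C2[of g], assumption, rule refl)
  apply (rule S_I1)
  by simp

lemmas wcomp = wmult_def reduce_def conjw_def winv_def inverse_letters_def
  imgp_def img_Cons AK3_def

lemma path_sp_xy: "ac_equiv (imgp [lx] [ly] AK3) AK3"
proof -
  have e: "imgp [lx] [ly] AK3 = ([lx, ly, lx, lyi, lxi, lyi], [lx, lx, lx, lyi, lyi, lyi, lyi])" by (simp add: wcomp)
  show ?thesis unfolding e
    by (simp add: wcomp ac_refl)
qed

lemma path_sp_xY: "ac_equiv (imgp [lx] [lyi] AK3) AK3"
proof -
  have e: "imgp [lx] [lyi] AK3 = ([lx, lyi, lx, ly, lxi, ly], [lx, lx, lx, ly, ly, ly, ly])" by (simp add: wcomp)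
  show ?thesis unfolding e
    apply (rule S_M1m[where w="[lx, lyi]" and g="[lx]" and r1'="[ly, lxi, ly, lx, lyi, lyi, lyi, lyi, lyi, lxi, lxi]"], simp add: wcomp, simp add: wcomp, simp add: wcomp)
    apply (rule S_M2p[where w="[]" and g="[lx, lx]" and r2'="[lx, ly, ly, ly, ly, ly, lxi, ly, lx, lyi, lyi, lyi, lyi, lyi]"], simp add: wcomp, simp add: wcomp, simp add: wcomp)
    apply (rule S_M1p[where w="[ly, lxi, ly, lx, lyi, lyi, lyi, lyi, lyi, lxi]" and g="[]" and r1'="[lxi, ly, lxi, ly, ly, lx, lyi, lyi, lyi, lyi, lyi]"], simp add: wcomp, simp add: wcomp, simp add: wcomp)
    apply (rule S_M1p[where w="[lxi]" and g="[ly]" and r1'="[lxi, ly, ly, ly, lx, lyi, lyi, lyi, lyi]"], simp add: wcomp, simp add: wcomp, simp add: wcomp)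
    apply (rule S_M2p[where w="[lx]" and g="[ly, ly, ly, ly]" and r2'="[ly, lxi, ly, lx, lyi, lyi, lx]"], simp add: wcomp, simp add: wcomp, simp add: wcomp)
    apply (rule S_M1p[where w="[]" and g="[lxi, ly, ly]" and r1'="[ly, lx, lyi, lyi, lyi, lxi, ly, lx]"], simp add: wcomp, simp add: wcomp, simp add: wcomp)
    apply (rule S_M2m[where w="[ly, lxi]" and g="[ly, lx, lyi, lyi]" and r2'="[lx, ly, lxi, lxi, lyi, lx, ly]"], simp add: wcomp, simp add: wcomp, simp add: wcomp)
    apply (rule S_M1p[where w="[ly, lx, lyi, lyi]" and g="[lyi, lxi, ly, lx]" and r1'="[ly, lx, lyi, lyi, lx, ly, lxi]"], simp add: wcomp, simp add: wcomp, simp add: wcomp)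
    apply (rule S_M1m[where w="[ly, lx, lyi, lyi, lx, ly]" and g="[]" and r1'="[lxi, ly, lx, lyi, lx, lx, lyi, lxi]"], simp add: wcomp, simp add: wcomp, simp add: wcomp)
    apply (rule S_M1p[where w="[lxi, ly, lx, lyi, lx, lx]" and g="[lyi, lxi]" and r1'="[lxi, ly, lx, lyi, lx, lx, lx, ly, lxi, lxi, lyi]"], simp add: wcomp, simp add: wcomp, simp add: wcomp)
    apply (rule S_M1p[where w="[lxi, ly, lx, lyi, lx, lx, lx, ly, lxi, lxi]" and g="[lyi, lxi, ly, lx]" and r1'="[lyi, lx, lx, lx, ly, lxi, ly, lxi]"], simp add: wcomp, simp add: wcomp, simp add: wcomp)
    apply (rule S_M2m[where w="[lx, ly, lxi, lxi]" and g="[lyi, lx]" and r2'="[ly, lx, ly, lxi, lyi, lx, lyi, lxi, lxi]"], simp add: wcomp, simp add: wcomp, simp add: wcomp)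
    apply (rule S_M1p[where w="[lyi]" and g="[lx, lx]" and r1'="[lx, ly, lxi, ly, ly, lxi, lyi, lx, lyi]"], simp add: wcomp, simp add: wcomp, simp add: wcomp)
    apply (rule S_M2p[where w="[]" and g="[ly]" and r2'="[lx, ly, lxi, lyi, lx, lyi, lxi, ly, lxi, ly, ly, lxi, lyi, lx]"], simp add: wcomp, simp add: wcomp, simp add: wcomp)
    apply (rule S_M2p[where w="[lx, ly, lxi, lyi, lx, lyi, lxi]" and g="[ly, lxi, ly]" and r2'="[ly, lxi, lyi, lx, lx, ly, lxi, ly, lxi]"], simp add: wcomp, simp add: wcomp, simp add: wcomp)
    apply (rule S_M2p[where w="[]" and g="[ly, lxi]" and r2'="[lyi, lx, lx, ly, lxi, ly, ly, lxi, ly, ly, lxi, lyi]"], simp add: wcomp, simp add: wcomp, simp add: wcomp)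
    apply (rule S_M2m[where w="[lyi, lx]" and g="[lx, ly, lxi, ly, ly, lxi]" and r2'="[ly, ly, lxi, lyi, lyi, lx, ly, lxi, ly]"], simp add: wcomp, simp add: wcomp, simp add: wcomp)
    apply (rule S_M1m[where w="[lx, ly, lxi, ly]" and g="[ly]" and r1'="[lxi, lyi, lx, ly, lx, lyi]"], simp add: wcomp, simp add: wcomp, simp add: wcomp)
    apply (rule S_M2m[where w="[ly, ly]" and g="[lxi, lyi]" and r2'="[lyi, lx, ly, lxi, ly, ly, ly, ly, lxi, lyi, lxi]"], simp add: wcomp, simp add: wcomp, simp add: wcomp)
    apply (rule S_M2m[where w="[lyi, lx, ly, lxi, ly, ly, ly, ly, lxi, lyi]" and g="[lxi, lyi, lx, ly]" and r2'="[lxi, ly, ly, ly, ly, lxi, lxi]"], simp add: wcomp, simp add: wcomp, simp add: wcomp)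
    apply (rule S_C1[where g="[lxi, lyi]" and r1'="[lx, ly, lx, lyi, lxi, lyi]"], simp add: wcomp, simp add: wcomp)
    apply (rule S_I2)
    apply (rule S_C2[where g="[lx, lx, lyi, lyi, lyi, lyi]" and r2'="[lx, lx, lx, lyi, lyi, lyi, lyi]"], simp add: wcomp, simp add: wcomp)
    by (simp add: wcomp ac_refl)
qed

lemma path_sp_Xy: "ac_equiv (imgp [lxi] [ly] AK3) AK3"
proof -
  have e: "imgp [lxi] [ly] AK3 = ([lxi, ly, lxi, lyi, lx, lyi], [lxi, lxi, lxi, lyi, lyi, lyi, lyi])" by (simp add: wcomp)
  show ?thesis unfolding e
    apply (rule S_M1m[where w="[lxi, ly]" and g="[lxi]" and r1'="[lyi, lx, lyi, lxi, ly, ly, ly, ly, ly, lx, lx]"], simp add: wcomp, simp add: wcomp, simp add: wcomp)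
    apply (rule S_M2p[where w="[]" and g="[lxi, lxi]" and r2'="[lxi, lyi, lyi, lyi, lyi, lyi, lx, lyi, lxi, ly, ly, ly, ly, ly]"], simp add: wcomp, simp add: wcomp, simp add: wcomp)
    apply (rule S_M1p[where w="[lyi, lx, lyi, lxi, ly, ly, ly, ly, ly, lx]" and g="[]" and r1'="[lx, lyi, lx, lyi, lyi, lxi, ly, ly, ly, ly, ly]"], simp add: wcomp, simp add: wcomp, simp add: wcomp)
    apply (rule S_M1p[where w="[lx]" and g="[lyi]" and r1'="[lx, lyi, lyi, lyi, lxi, ly, ly, ly, ly]"], simp add: wcomp, simp add: wcomp, simp add: wcomp)
    apply (rule S_M2p[where w="[lxi]" and g="[lyi, lyi, lyi, lyi]" and r2'="[lyi, lx, lyi, lxi, ly, ly, lxi]"], simp add: wcomp, simp add: wcomp, simp add: wcomp)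
    apply (rule S_M1p[where w="[]" and g="[lx, lyi, lyi]" and r1'="[lyi, lxi, ly, ly, ly, lx, lyi, lxi]"], simp add: wcomp, simp add: wcomp, simp add: wcomp)
    apply (rule S_M2m[where w="[lyi, lx]" and g="[lyi, lxi, ly, ly]" and r2'="[lxi, lyi, lx, lx, ly, lxi, lyi]"], simp add: wcomp, simp add: wcomp, simp add: wcomp)
    apply (rule S_M1p[where w="[lyi, lxi, ly, ly]" and g="[ly, lx, lyi, lxi]" and r1'="[lyi, lxi, ly, ly, lxi, lyi, lx]"], simp add: wcomp, simp add: wcomp, simp add: wcomp)
    apply (rule S_M1m[where w="[lyi, lxi, ly, ly, lxi, lyi]" and g="[]" and r1'="[lx, lyi, lxi, ly, lxi, lxi, ly, lx]"], simp add: wcomp, simp add: wcomp, simp add: wcomp)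
    apply (rule S_M1p[where w="[lx, lyi, lxi, ly, lxi, lxi]" and g="[ly, lx]" and r1'="[lx, lyi, lxi, ly, lxi, lxi, lxi, lyi, lx, lx, ly]"], simp add: wcomp, simp add: wcomp, simp add: wcomp)
    apply (rule S_M1p[where w="[lx, lyi, lxi, ly, lxi, lxi, lxi, lyi, lx, lx]" and g="[ly, lx, lyi, lxi]" and r1'="[ly, lxi, lxi, lxi, lyi, lx, lyi, lx]"], simp add: wcomp, simp add: wcomp, simp add: wcomp)
    apply (rule S_M2m[where w="[lxi, lyi, lx, lx]" and g="[ly, lxi]" and r2'="[lyi, lxi, lyi, lx, ly, lxi, ly, lx, lx]"], simp add: wcomp, simp add: wcomp, simp add: wcomp)
    apply (rule S_M1p[where w="[ly]" and g="[lxi, lxi]" and r1'="[lxi, lyi, lx, lyi, lyi, lx, ly, lxi, ly]"], simp add: wcomp, simp add: wcomp, simp add: wcomp)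
    apply (rule S_M2p[where w="[]" and g="[lyi]" and r2'="[lxi, lyi, lx, ly, lxi, ly, lx, lyi, lx, lyi, lyi, lx, ly, lxi]"], simp add: wcomp, simp add: wcomp, simp add: wcomp)
    apply (rule S_M2p[where w="[lxi, lyi, lx, ly, lxi, ly, lx]" and g="[lyi, lx, lyi]" and r2'="[lyi, lx, ly, lxi, lxi, lyi, lx, lyi, lx]"], simp add: wcomp, simp add: wcomp, simp add: wcomp)
    apply (rule S_M2p[where w="[]" and g="[lyi, lx]" and r2'="[ly, lxi, lxi, lyi, lx, lyi, lyi, lx, lyi, lyi, lx, ly]"], simp add: wcomp, simp add: wcomp, simp add: wcomp)
    apply (rule S_M2m[where w="[ly, lxi]" and g="[lxi, lyi, lx, lyi, lyi, lx]" and r2'="[lyi, lyi, lx, ly, ly, lxi, lyi, lx, lyi]"], simp add: wcomp, simp add: wcomp, simp add: wcomp)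
    apply (rule S_M1m[where w="[lxi, lyi, lx, lyi]" and g="[lyi]" and r1'="[lx, ly, lxi, lyi, lxi, ly]"], simp add: wcomp, simp add: wcomp, simp add: wcomp)
    apply (rule S_M2m[where w="[lyi, lyi]" and g="[lx, ly]" and r2'="[ly, lxi, lyi, lx, lyi, lyi, lyi, lyi, lx, ly, lx]"], simp add: wcomp, simp add: wcomp, simp add: wcomp)
    apply (rule S_M2m[where w="[ly, lxi, lyi, lx, lyi, lyi, lyi, lyi, lx, ly]" and g="[lx, ly, lxi, lyi]" and r2'="[lx, lyi, lyi, lyi, lyi, lx, lx]"], simp add: wcomp, simp add: wcomp, simp add: wcomp)
    apply (rule S_I1)
    apply (rule S_C1[where g="[lyi]" and r1'="[lx, ly, lx, lyi, lxi, lyi]"], simp add: wcomp, simp add: wcomp)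
    apply (rule S_C2[where g="[lx, lyi, lyi, lyi, lyi]" and r2'="[lx, lx, lx, lyi, lyi, lyi, lyi]"], simp add: wcomp, simp add: wcomp)
    by (simp add: wcomp ac_refl)
qed

lemma path_sp_XY: "ac_equiv (imgp [lxi] [lyi] AK3) AK3"
proof -
  have e: "imgp [lxi] [lyi] AK3 = ([lxi, lyi, lxi, ly, lx, ly], [lxi, lxi, lxi, ly, ly, ly, ly])" by (simp add: wcomp)
  show ?thesis unfolding e
    apply (rule S_I1)
    apply (rule S_C1[where g="[lyi, lxi, lyi]" and r1'="[lx, ly, lx, lyi, lxi, lyi]"], simp add: wcomp, simp add: wcomp)
    apply (rule S_I2)
    apply (rule S_C2[where g="[lyi, lyi, lyi, lyi]" and r2'="[lx, lx, lx, lyi, lyi, lyi, lyi]"], simp add: wcomp, simp add: wcomp)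
    by (simp add: wcomp ac_refl)
qed

lemma path_sp_yx: "ac_equiv (imgp [ly] [lx] AK3) AK3"
proof -
  have e: "imgp [ly] [lx] AK3 = ([ly, lx, ly, lxi, lyi, lxi], [ly, ly, ly, lxi, lxi, lxi, lxi])" by (simp add: wcomp)
  show ?thesis unfolding e
    apply (rule S_M2m[where w="[]" and g="[ly]" and r2'="[ly, ly, lxi, lxi, lxi, ly, lx, lyi, lxi]"], simp add: wcomp, simp add: wcomp, simp add: wcomp)
    apply (rule S_M2m[where w="[]" and g="[ly]" and r2'="[ly, lxi, lxi, lxi, ly, lx, lx, lyi, lxi]"], simp add: wcomp, simp add: wcomp, simp add: wcomp)
    apply (rule S_M2m[where w="[]" and g="[ly]" and r2'="[lxi, lxi, lxi, ly, lx, lx, lx, lyi, lxi]"], simp add: wcomp, simp add: wcomp, simp add: wcomp)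
    apply (rule S_M2m[where w="[]" and g="[]" and r2'="[lxi, lxi, lxi, ly, lx, lx, lx, lx, lyi, lxi, lyi]"], simp add: wcomp, simp add: wcomp, simp add: wcomp)
    apply (rule S_M2m[where w="[lxi]" and g="[]" and r2'="[lxi, lxi, ly, lx, lx, lx, lx, lyi, lyi, lxi, lyi]"], simp add: wcomp, simp add: wcomp, simp add: wcomp)
    apply (rule S_M2m[where w="[lxi]" and g="[]" and r2'="[lxi, ly, lx, lx, lx, lx, lyi, lyi, lyi, lxi, lyi]"], simp add: wcomp, simp add: wcomp, simp add: wcomp)
    apply (rule S_M2m[where w="[lxi]" and g="[ly, lx]" and r2'="[lx, lx, lx, lyi, lyi, lyi, lyi]"], simp add: wcomp, simp add: wcomp, simp add: wcomp)
    apply (rule S_I1)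
    by (simp add: wcomp ac_refl)
qed

lemma path_sp_yX: "ac_equiv (imgp [ly] [lxi] AK3) AK3"
proof -
  have e: "imgp [ly] [lxi] AK3 = ([ly, lxi, ly, lx, lyi, lx], [ly, ly, ly, lx, lx, lx, lx])" by (simp add: wcomp)
  show ?thesis unfolding e
    apply (rule S_M1m[where w="[]" and g="[ly]" and r1'="[lxi, ly, lx, lyi, lxi, lxi, lxi, lyi, lyi]"], simp add: wcomp, simp add: wcomp, simp add: wcomp)
    apply (rule S_M2p[where w="[ly]" and g="[ly, ly, lx, lx, lx]" and r2'="[lx, ly, lxi, ly, lx, lyi]"], simp add: wcomp, simp add: wcomp, simp add: wcomp)
    apply (rule S_M1p[where w="[lxi]" and g="[ly]" and r1'="[lx, lyi, lxi, lxi, lxi, lyi, lxi, ly, lx]"], simp add: wcomp, simp add: wcomp, simp add: wcomp)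
    apply (rule S_M1p[where w="[lx, lyi, lxi]" and g="[]" and r1'="[lxi, lxi, lyi, lxi, ly, lx, ly, lx, lyi]"], simp add: wcomp, simp add: wcomp, simp add: wcomp)
    apply (rule S_M2p[where w="[lx]" and g="[ly, lxi]" and r2'="[ly, lx, lyi, lxi, lyi, lxi, ly, lx, ly]"], simp add: wcomp, simp add: wcomp, simp add: wcomp)
    apply (rule S_M1p[where w="[lxi, lxi, lyi]" and g="[]" and r1'="[lxi, ly, lx, ly, lx, lyi, lxi, lyi, lxi, lyi, lxi, ly, lx, ly]"], simp add: wcomp, simp add: wcomp, simp add: wcomp)
    apply (rule S_M1m[where w="[lxi, ly, lx]" and g="[ly, lx, lyi, lxi, lyi, lxi]" and r1'="[lyi, lxi, ly, lx, ly, lxi, ly, lx, lyi, lxi, lyi]"], simp add: wcomp, simp add: wcomp, simp add: wcomp)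
    apply (rule S_M1m[where w="[lyi, lxi, ly, lx, ly, lxi]" and g="[ly, lx, lyi, lxi, lyi]" and r1'="[lyi, lxi, ly, lx, ly, lxi, lyi, lxi, lyi, lx]"], simp add: wcomp, simp add: wcomp, simp add: wcomp)
    apply (rule S_M1p[where w="[lyi, lxi, ly, lx, ly, lxi, lyi]" and g="[]" and r1'="[lxi, lyi, lx, lyi, lxi, lxi, ly, lx, ly]"], simp add: wcomp, simp add: wcomp, simp add: wcomp)
    apply (rule S_M2p[where w="[ly, lx]" and g="[lyi, lxi, lyi]" and r2'="[lxi, ly, lx, ly, lx, lyi, lxi, lxi]"], simp add: wcomp, simp add: wcomp, simp add: wcomp)
    apply (rule S_M1m[where w="[lxi, lyi, lx, lyi, lxi]" and g="[lxi, ly, lx, ly]" and r1'="[lxi, lyi, lx, lyi, lx, ly, lxi]"], simp add: wcomp, simp add: wcomp, simp add: wcomp)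
    apply (rule S_M2p[where w="[lxi, ly, lx]" and g="[]" and r2'="[ly, lx, lyi, lxi, lxi, lyi, lx, ly, lxi]"], simp add: wcomp, simp add: wcomp, simp add: wcomp)
    apply (rule S_M2m[where w="[ly, lx, lyi, lxi]" and g="[lxi, lyi, lx]" and r2'="[ly, lxi, ly, lx, lyi, lyi, lxi, ly]"], simp add: wcomp, simp add: wcomp, simp add: wcomp)
    apply (rule S_M1p[where w="[lxi, lyi, lx, lyi]" and g="[]" and r1'="[lx, ly, lxi, lyi, lyi, lxi, ly]"], simp add: wcomp, simp add: wcomp, simp add: wcomp)
    apply (rule S_M2m[where w="[ly, lxi, ly]" and g="[lx]" and r2'="[lyi, lyi, lxi, ly, ly, ly, ly, lx, lyi]"], simp add: wcomp, simp add: wcomp, simp add: wcomp)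
    apply (rule S_M1p[where w="[lx]" and g="[ly, lxi, lyi, lyi]" and r1'="[lxi, ly, lx, lyi, lyi, lxi, ly, ly]"], simp add: wcomp, simp add: wcomp, simp add: wcomp)
    apply (rule S_M1p[where w="[lxi, ly, lx, lyi, lyi, lxi, ly]" and g="[ly, lxi]" and r1'="[ly, lx, lyi, lyi, lxi, lyi, lxi, ly, ly, ly, ly]"], simp add: wcomp, simp add: wcomp, simp add: wcomp)
    apply (rule S_M1m[where w="[ly, lx, lyi]" and g="[lyi]" and r1'="[lxi, lyi, lxi, ly, lx, ly]"], simp add: wcomp, simp add: wcomp, simp add: wcomp)
    apply (rule S_M2p[where w="[]" and g="[lyi]" and r2'="[lyi, lxi, ly, ly, ly, ly, lx, lyi, lxi, lyi, lxi, ly, lx]"], simp add: wcomp, simp add: wcomp, simp add: wcomp)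
    apply (rule S_M2p[where w="[]" and g="[lyi, lxi]" and r2'="[ly, ly, ly, ly, lx, lyi, lxi, lyi, lxi, lxi, ly]"], simp add: wcomp, simp add: wcomp, simp add: wcomp)
    apply (rule S_M2p[where w="[ly, ly, ly, ly, lx]" and g="[lyi, lxi, lyi]" and r2'="[lxi, lxi, ly, ly, ly, ly, lxi]"], simp add: wcomp, simp add: wcomp, simp add: wcomp)
    apply (rule S_I1)
    apply (rule S_C1[where g="[lyi, lxi, lyi]" and r1'="[lx, ly, lx, lyi, lxi, lyi]"], simp add: wcomp, simp add: wcomp)
    apply (rule S_I2)
    apply (rule S_C2[where g="[lx, lyi, lyi, lyi, lyi]" and r2'="[lx, lx, lx, lyi, lyi, lyi, lyi]"], simp add: wcomp, simp add: wcomp)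
    by (simp add: wcomp ac_refl)
qed

lemma path_sp_Yx: "ac_equiv (imgp [lyi] [lx] AK3) AK3"
proof -
  have e: "imgp [lyi] [lx] AK3 = ([lyi, lx, lyi, lxi, ly, lxi], [lyi, lyi, lyi, lxi, lxi, lxi, lxi])" by (simp add: wcomp)
  show ?thesis unfolding e
    apply (rule S_M1m[where w="[]" and g="[lyi]" and r1'="[lx, lyi, lxi, ly, lx, lx, lx, ly, ly]"], simp add: wcomp, simp add: wcomp, simp add: wcomp)
    apply (rule S_M2p[where w="[lyi]" and g="[lyi, lyi, lxi, lxi, lxi]" and r2'="[lxi, lyi, lx, lyi, lxi, ly]"], simp add: wcomp, simp add: wcomp, simp add: wcomp)
    apply (rule S_M1p[where w="[lx]" and g="[lyi]" and r1'="[lxi, ly, lx, lx, lx, ly, lx, lyi, lxi]"], simp add: wcomp, simp add: wcomp, simp add: wcomp)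
    apply (rule S_M1p[where w="[lxi, ly, lx]" and g="[]" and r1'="[lx, lx, ly, lx, lyi, lxi, lyi, lxi, ly]"], simp add: wcomp, simp add: wcomp, simp add: wcomp)
    apply (rule S_M2p[where w="[lxi]" and g="[lyi, lx]" and r2'="[lyi, lxi, ly, lx, ly, lx, lyi, lxi, lyi]"], simp add: wcomp, simp add: wcomp, simp add: wcomp)
    apply (rule S_M1p[where w="[lx, lx, ly]" and g="[]" and r1'="[lx, lyi, lxi, lyi, lxi, ly, lx, ly, lx, ly, lx, lyi, lxi, lyi]"], simp add: wcomp, simp add: wcomp, simp add: wcomp)
    apply (rule S_M1m[where w="[lx, lyi, lxi]" and g="[lyi, lxi, ly, lx, ly, lx]" and r1'="[ly, lx, lyi, lxi, lyi, lx, lyi, lxi, ly, lx, ly]"], simp add: wcomp, simp add: wcomp, simp add: wcomp)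
    apply (rule S_M1m[where w="[ly, lx, lyi, lxi, lyi, lx]" and g="[lyi, lxi, ly, lx, ly]" and r1'="[ly, lx, lyi, lxi, lyi, lx, ly, lx, ly, lxi]"], simp add: wcomp, simp add: wcomp, simp add: wcomp)
    apply (rule S_M1p[where w="[ly, lx, lyi, lxi, lyi, lx, ly]" and g="[]" and r1'="[lx, ly, lxi, ly, lx, lx, lyi, lxi, lyi]"], simp add: wcomp, simp add: wcomp, simp add: wcomp)
    apply (rule S_M2p[where w="[lyi, lxi]" and g="[ly, lx, ly]" and r2'="[lx, lyi, lxi, lyi, lxi, ly, lx, lx]"], simp add: wcomp, simp add: wcomp, simp add: wcomp)
    apply (rule S_M1m[where w="[lx, ly, lxi, ly, lx]" and g="[lx, lyi, lxi, lyi]" and r1'="[lx, ly, lxi, ly, lxi, lyi, lx]"], simp add: wcomp, simp add: wcomp, simp add: wcomp)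
    apply (rule S_M2p[where w="[lx, lyi, lxi]" and g="[]" and r2'="[lyi, lxi, ly, lx, lx, ly, lxi, lyi, lx]"], simp add: wcomp, simp add: wcomp, simp add: wcomp)
    apply (rule S_M2m[where w="[lyi, lxi, ly, lx]" and g="[lx, ly, lxi]" and r2'="[lyi, lx, lyi, lxi, ly, ly, lx, lyi]"], simp add: wcomp, simp add: wcomp, simp add: wcomp)
    apply (rule S_M1p[where w="[lx, ly, lxi, ly]" and g="[]" and r1'="[lxi, lyi, lx, ly, ly, lx, lyi]"], simp add: wcomp, simp add: wcomp, simp add: wcomp)
    apply (rule S_M2m[where w="[lyi, lx, lyi]" and g="[lxi]" and r2'="[ly, ly, lx, lyi, lyi, lyi, lyi, lxi, ly]"], simp add: wcomp, simp add: wcomp, simp add: wcomp)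
    apply (rule S_M1p[where w="[lxi]" and g="[lyi, lx, ly, ly]" and r1'="[lx, lyi, lxi, ly, ly, lx, lyi, lyi]"], simp add: wcomp, simp add: wcomp, simp add: wcomp)
    apply (rule S_M1p[where w="[lx, lyi, lxi, ly, ly, lx, lyi]" and g="[lyi, lx]" and r1'="[lyi, lxi, ly, ly, lx, ly, lx, lyi, lyi, lyi, lyi]"], simp add: wcomp, simp add: wcomp, simp add: wcomp)
    apply (rule S_M1m[where w="[lyi, lxi, ly]" and g="[ly]" and r1'="[lx, ly, lx, lyi, lxi, lyi]"], simp add: wcomp, simp add: wcomp, simp add: wcomp)
    apply (rule S_M2p[where w="[]" and g="[ly]" and r2'="[ly, lx, lyi, lyi, lyi, lyi, lxi, ly, lx, ly, lx, lyi, lxi]"], simp add: wcomp, simp add: wcomp, simp add: wcomp)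
    apply (rule S_M2p[where w="[]" and g="[ly, lx]" and r2'="[lyi, lyi, lyi, lyi, lxi, ly, lx, ly, lx, lx, lyi]"], simp add: wcomp, simp add: wcomp, simp add: wcomp)
    apply (rule S_M2p[where w="[lyi, lyi, lyi, lyi, lxi]" and g="[ly, lx, ly]" and r2'="[lx, lx, lyi, lyi, lyi, lyi, lx]"], simp add: wcomp, simp add: wcomp, simp add: wcomp)
    apply (rule S_C2[where g="[lx, lx, lyi, lyi, lyi, lyi]" and r2'="[lx, lx, lx, lyi, lyi, lyi, lyi]"], simp add: wcomp, simp add: wcomp)
    by (simp add: wcomp ac_refl)
qed

lemma path_sp_YX: "ac_equiv (imgp [lyi] [lxi] AK3) AK3"
proof -
  have e: "imgp [lyi] [lxi] AK3 = ([lyi, lxi, lyi, lx, ly, lx], [lyi, lyi, lyi, lx, lx, lx, lx])" by (simp add: wcomp)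
  show ?thesis unfolding e
    apply (rule S_M2m[where w="[]" and g="[lyi]" and r2'="[lyi, lyi, lx, lx, lx, lyi, lxi, ly, lx]"], simp add: wcomp, simp add: wcomp, simp add: wcomp)
    apply (rule S_M2m[where w="[]" and g="[lyi]" and r2'="[lyi, lx, lx, lx, lyi, lxi, lxi, ly, lx]"], simp add: wcomp, simp add: wcomp, simp add: wcomp)
    apply (rule S_M2m[where w="[]" and g="[lyi]" and r2'="[lx, lx, lx, lyi, lxi, lxi, lxi, ly, lx]"], simp add: wcomp, simp add: wcomp, simp add: wcomp)
    apply (rule S_M2m[where w="[]" and g="[]" and r2'="[lx, lx, lx, lyi, lxi, lxi, lxi, lxi, ly, lx, ly]"], simp add: wcomp, simp add: wcomp, simp add: wcomp)
    apply (rule S_M2m[where w="[lx]" and g="[]" and r2'="[lx, lx, lyi, lxi, lxi, lxi, lxi, ly, ly, lx, ly]"], simp add: wcomp, simp add: wcomp, simp add: wcomp)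
    apply (rule S_M2m[where w="[lx]" and g="[]" and r2'="[lx, lyi, lxi, lxi, lxi, lxi, ly, ly, ly, lx, ly]"], simp add: wcomp, simp add: wcomp, simp add: wcomp)
    apply (rule S_M2m[where w="[lx]" and g="[lyi, lxi]" and r2'="[lxi, lxi, lxi, ly, ly, ly, ly]"], simp add: wcomp, simp add: wcomp, simp add: wcomp)
    apply (rule S_C1[where g="[lyi, lxi, lyi]" and r1'="[lx, ly, lx, lyi, lxi, lyi]"], simp add: wcomp, simp add: wcomp)
    apply (rule S_I2)
    apply (rule S_C2[where g="[lyi, lyi, lyi, lyi]" and r2'="[lx, lx, lx, lyi, lyi, lyi, lyi]"], simp add: wcomp, simp add: wcomp)
    by (simp add: wcomp ac_refl)
qed

lemma path_n_ab: "ac_equiv (imgp [lx, lyi] [ly] AK3) AK3"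
proof -
  have e: "imgp [lx, lyi] [ly] AK3 = ([lx, lx, lyi, lxi, lyi], [lx, lyi, lx, lyi, lx, lyi, lyi, lyi, lyi, lyi])" by (simp add: wcomp)
  show ?thesis unfolding e
    apply (rule S_M1m[where w="[lx]" and g="[lx, lyi]" and r1'="[lxi, lyi, lx, ly, ly, ly, ly, ly, lxi, ly, lxi]"], simp add: wcomp, simp add: wcomp, simp add: wcomp)
    apply (rule S_M2p[where w="[]" and g="[lx, lyi, lx, lyi]" and r2'="[lx, lyi, lyi, lyi, lyi, lyi, lxi, lyi, lx, ly, ly, ly, ly]"], simp add: wcomp, simp add: wcomp, simp add: wcomp)
    apply (rule S_M1p[where w="[lxi, lyi, lx, ly, ly, ly, ly, ly, lxi]" and g="[]" and r1'="[ly, lxi, lxi, lyi, lyi, lx, ly, ly, ly, ly]"], simp add: wcomp, simp add: wcomp, simp add: wcomp)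
    apply (rule S_M1p[where w="[ly, lxi]" and g="[]" and r1'="[lxi, lyi, lyi, lyi, lx, ly, ly, ly, ly]"], simp add: wcomp, simp add: wcomp, simp add: wcomp)
    apply (rule S_M2p[where w="[lx]" and g="[lyi, lyi, lyi, lyi]" and r2'="[lyi, lxi, lyi, lx, ly, lx]"], simp add: wcomp, simp add: wcomp, simp add: wcomp)
    apply (rule S_M2m[where w="[lyi]" and g="[lxi, lyi]" and r2'="[lx, ly, lx, lyi, lyi, lyi, lyi, lyi, lxi, ly, ly]"], simp add: wcomp, simp add: wcomp, simp add: wcomp)
    apply (rule S_M1p[where w="[lxi, lyi]" and g="[lyi, lyi, lx, ly, ly, ly, ly]" and r1'="[lxi, lyi, lx, ly, lx, lyi]"], simp add: wcomp, simp add: wcomp, simp add: wcomp)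
    apply (rule S_M2p[where w="[lx]" and g="[ly]" and r2'="[lx, lyi, lyi, lyi, lyi, lyi, lxi, ly, lx, ly, lx]"], simp add: wcomp, simp add: wcomp, simp add: wcomp)
    apply (rule S_M2p[where w="[lx, lyi, lyi, lyi, lyi, lyi, lxi, ly, lx]" and g="[ly]" and r2'="[lx, lx, lyi, lyi, lyi, lyi, lx]"], simp add: wcomp, simp add: wcomp, simp add: wcomp)
    apply (rule S_C1[where g="[lxi, lyi]" and r1'="[lx, ly, lx, lyi, lxi, lyi]"], simp add: wcomp, simp add: wcomp)
    apply (rule S_C2[where g="[lx, lx, lyi, lyi, lyi, lyi]" and r2'="[lx, lx, lx, lyi, lyi, lyi, lyi]"], simp add: wcomp, simp add: wcomp)
    by (simp add: wcomp ac_refl)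
qed

lemma path_n_aB: "ac_equiv (imgp [lx, ly] [ly] AK3) AK3"
proof -
  have e: "imgp [lx, ly] [ly] AK3 = ([lx, ly, ly, lx, lyi, lxi, lyi], [lx, ly, lx, ly, lx, lyi, lyi, lyi])" by (simp add: wcomp)
  show ?thesis unfolding e
    apply (rule S_M1m[where w="[]" and g="[lx, ly]" and r1'="[ly, lx, lyi, lxi, ly, ly, lxi, lyi, lxi]"], simp add: wcomp, simp add: wcomp, simp add: wcomp)
    apply (rule S_M2p[where w="[]" and g="[lx, ly, lx]" and r2'="[ly, lx, lyi, lyi, lx, lyi, lxi, ly, ly]"], simp add: wcomp, simp add: wcomp, simp add: wcomp)
    apply (rule S_M1p[where w="[ly, lx, lyi, lxi, ly, ly, lxi, lyi]" and g="[]" and r1'="[lxi, ly, lx, lyi, lyi, lxi, ly, ly]"], simp add: wcomp, simp add: wcomp, simp add: wcomp)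
    apply (rule S_M1m[where w="[lxi]" and g="[ly, lx, lyi, lyi]" and r1'="[lxi, ly, ly, lxi, lyi, lyi, lx, ly, lxi]"], simp add: wcomp, simp add: wcomp, simp add: wcomp)
    apply (rule S_M1p[where w="[lxi, ly, ly, lxi, lyi]" and g="[lyi]" and r1'="[lx, ly, lxi, lyi, lxi, ly]"], simp add: wcomp, simp add: wcomp, simp add: wcomp)
    apply (rule S_M2p[where w="[ly, lx, lyi, lyi, lx, lyi, lxi]" and g="[]" and r2'="[ly, ly, ly, lx, lyi, lyi, lyi, lxi, ly]"], simp add: wcomp, simp add: wcomp, simp add: wcomp)
    apply (rule S_M2p[where w="[ly, ly, ly, lx, lyi, lyi, lyi, lxi]" and g="[]" and r2'="[ly, ly, ly, ly, lx, lyi, lyi, lxi, lyi, lxi, ly]"], simp add: wcomp, simp add: wcomp, simp add: wcomp)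
    apply (rule S_M2p[where w="[ly, ly, ly, ly, lx, lyi, lyi, lxi]" and g="[lyi]" and r2'="[lxi, ly, ly, ly, ly, ly, lx, lyi, lxi, lyi, lxi]"], simp add: wcomp, simp add: wcomp, simp add: wcomp)
    apply (rule S_M2p[where w="[lxi, ly, ly, ly, ly, ly, lx, lyi, lxi]" and g="[lyi]" and r2'="[lxi, lxi, ly, ly, ly, ly, lxi]"], simp add: wcomp, simp add: wcomp, simp add: wcomp)
    apply (rule S_I1)
    apply (rule S_C1[where g="[lyi]" and r1'="[lx, ly, lx, lyi, lxi, lyi]"], simp add: wcomp, simp add: wcomp)
    apply (rule S_I2)
    apply (rule S_C2[where g="[lx, lyi, lyi, lyi, lyi]" and r2'="[lx, lx, lx, lyi, lyi, lyi, lyi]"], simp add: wcomp, simp add: wcomp)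
    by (simp add: wcomp ac_refl)
qed

lemma path_n_ba: "ac_equiv (imgp [lyi, lx] [ly] AK3) AK3"
proof -
  have e: "imgp [lyi, lx] [ly] AK3 = ([lyi, lx, lx, lyi, lxi], [lyi, lx, lyi, lx, lyi, lx, lyi, lyi, lyi, lyi])" by (simp add: wcomp)
  show ?thesis unfolding e
    apply (rule S_M2m[where w="[]" and g="[lyi, lx]" and r2'="[lyi, lx, lyi, lx, lyi, lyi, lyi, lyi, lx, ly, lxi]"], simp add: wcomp, simp add: wcomp, simp add: wcomp)
    apply (rule S_M2m[where w="[]" and g="[lyi, lx]" and r2'="[lyi, lx, lyi, lyi, lyi, lyi, lx, ly, ly, lxi]"], simp add: wcomp, simp add: wcomp, simp add: wcomp)
    apply (rule S_M2m[where w="[]" and g="[lyi, lx]" and r2'="[lyi, lyi, lyi, lyi, lx, ly, ly, ly, lxi]"], simp add: wcomp, simp add: wcomp, simp add: wcomp)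
    apply (rule S_M2m[where w="[lyi, lyi, lyi]" and g="[lyi, lx]" and r2'="[ly, ly, ly, lxi, lyi, lyi, lyi, lx, ly, lxi]"], simp add: wcomp, simp add: wcomp, simp add: wcomp)
    apply (rule S_M1p[where w="[lyi, lx]" and g="[lx, lyi, lxi]" and r1'="[lyi, lx, ly, ly, ly, lxi, lyi, lyi, lyi]"], simp add: wcomp, simp add: wcomp, simp add: wcomp)
    apply (rule S_M2m[where w="[ly, ly, ly, lxi, lyi, lyi]" and g="[lyi, lx, ly]" and r2'="[lxi, ly, ly, ly, lxi, ly, lx, lyi, lyi]"], simp add: wcomp, simp add: wcomp, simp add: wcomp)
    apply (rule S_M1p[where w="[lyi, lx]" and g="[ly, ly]" and r1'="[ly, lxi, lyi, lxi, ly, lx]"], simp add: wcomp, simp add: wcomp, simp add: wcomp)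
    apply (rule S_M2p[where w="[]" and g="[lxi]" and r2'="[ly, ly, ly, lxi, ly, lx, lyi, lxi, lyi, lxi, ly]"], simp add: wcomp, simp add: wcomp, simp add: wcomp)
    apply (rule S_M2p[where w="[ly, ly, ly, lxi, ly, lx, lyi]" and g="[lxi, lyi]" and r2'="[lxi, ly, ly, ly, ly, lxi, lxi]"], simp add: wcomp, simp add: wcomp, simp add: wcomp)
    apply (rule S_I1)
    apply (rule S_C1[where g="[lxi, lyi]" and r1'="[lx, ly, lx, lyi, lxi, lyi]"], simp add: wcomp, simp add: wcomp)
    apply (rule S_I2)
    apply (rule S_C2[where g="[lx, lx, lyi, lyi, lyi, lyi]" and r2'="[lx, lx, lx, lyi, lyi, lyi, lyi]"], simp add: wcomp, simp add: wcomp)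
    by (simp add: wcomp ac_refl)
qed

lemma path_n_Ba: "ac_equiv (imgp [ly, lx] [ly] AK3) AK3"
proof -
  have e: "imgp [ly, lx] [ly] AK3 = ([ly, lx, ly, ly, lx, lyi, lxi, lyi, lyi], [ly, lx, ly, lx, ly, lx, lyi, lyi, lyi, lyi])" by (simp add: wcomp)
  show ?thesis unfolding e
    apply (rule S_C1[where g="[ly]" and r1'="[lx, ly, ly, lx, lyi, lxi, lyi]"], simp add: wcomp, simp add: wcomp)
    apply (rule S_C2[where g="[ly]" and r2'="[lx, ly, lx, ly, lx, lyi, lyi, lyi]"], simp add: wcomp, simp add: wcomp)
    apply (rule S_M1m[where w="[]" and g="[lx, ly]" and r1'="[ly, lx, lyi, lxi, ly, ly, lxi, lyi, lxi]"], simp add: wcomp, simp add: wcomp, simp add: wcomp)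
    apply (rule S_M2p[where w="[]" and g="[lx, ly, lx]" and r2'="[ly, lx, lyi, lyi, lx, lyi, lxi, ly, ly]"], simp add: wcomp, simp add: wcomp, simp add: wcomp)
    apply (rule S_M1p[where w="[ly, lx, lyi, lxi, ly, ly, lxi, lyi]" and g="[]" and r1'="[lxi, ly, lx, lyi, lyi, lxi, ly, ly]"], simp add: wcomp, simp add: wcomp, simp add: wcomp)
    apply (rule S_M1m[where w="[lxi]" and g="[ly, lx, lyi, lyi]" and r1'="[lxi, ly, ly, lxi, lyi, lyi, lx, ly, lxi]"], simp add: wcomp, simp add: wcomp, simp add: wcomp)
    apply (rule S_M1p[where w="[lxi, ly, ly, lxi, lyi]" and g="[lyi]" and r1'="[lx, ly, lxi, lyi, lxi, ly]"], simp add: wcomp, simp add: wcomp, simp add: wcomp)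
    apply (rule S_M2p[where w="[ly, lx, lyi, lyi, lx, lyi, lxi]" and g="[]" and r2'="[ly, ly, ly, lx, lyi, lyi, lyi, lxi, ly]"], simp add: wcomp, simp add: wcomp, simp add: wcomp)
    apply (rule S_M2p[where w="[ly, ly, ly, lx, lyi, lyi, lyi, lxi]" and g="[]" and r2'="[ly, ly, ly, ly, lx, lyi, lyi, lxi, lyi, lxi, ly]"], simp add: wcomp, simp add: wcomp, simp add: wcomp)
    apply (rule S_M2p[where w="[ly, ly, ly, ly, lx, lyi, lyi, lxi]" and g="[lyi]" and r2'="[lxi, ly, ly, ly, ly, ly, lx, lyi, lxi, lyi, lxi]"], simp add: wcomp, simp add: wcomp, simp add: wcomp)
    apply (rule S_M2p[where w="[lxi, ly, ly, ly, ly, ly, lx, lyi, lxi]" and g="[lyi]" and r2'="[lxi, lxi, ly, ly, ly, ly, lxi]"], simp add: wcomp, simp add: wcomp, simp add: wcomp)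
    apply (rule S_I1)
    apply (rule S_C1[where g="[lyi]" and r1'="[lx, ly, lx, lyi, lxi, lyi]"], simp add: wcomp, simp add: wcomp)
    apply (rule S_I2)
    apply (rule S_C2[where g="[lx, lyi, lyi, lyi, lyi]" and r2'="[lx, lx, lx, lyi, lyi, lyi, lyi]"], simp add: wcomp, simp add: wcomp)
    by (simp add: wcomp ac_refl)
qed

lemma path_n_b_ba: "ac_equiv (imgp [lx] [ly, lxi] AK3) AK3"
proof -
  have e: "imgp [lx] [ly, lxi] AK3 = ([lx, ly, lx, lyi, lyi], [lx, lx, lx, lx, lyi, lx, lyi, lx, lyi, lx, lyi])" by (simp add: wcomp)
  show ?thesis unfolding e
    apply (rule S_M1m[where w="[]" and g="[lx]" and r1'="[ly, lx, lyi, lxi, ly, lxi, ly, lxi, ly, lxi, lxi, lxi]"], simp add: wcomp, simp add: wcomp, simp add: wcomp)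
    apply (rule S_M1p[where w="[ly, lx, lyi, lxi]" and g="[ly, lxi, ly, lxi, ly, lxi]" and r1'="[lxi, lxi, ly, lx, lyi, lx, lx, lx, lyi]"], simp add: wcomp, simp add: wcomp, simp add: wcomp)
    apply (rule S_M2m[where w="[lx, lx, lx, lx, lyi]" and g="[]" and r2'="[lx, lyi, lx, lyi, lx, lyi, lx, ly, lxi, lyi, lx, lx]"], simp add: wcomp, simp add: wcomp, simp add: wcomp)
    apply (rule S_M2m[where w="[lx, lyi]" and g="[]" and r2'="[lx, lyi, lx, lyi, lx, ly, lxi, lxi, lyi, lx, lx]"], simp add: wcomp, simp add: wcomp, simp add: wcomp)
    apply (rule S_M2m[where w="[lx, lyi]" and g="[]" and r2'="[lx, lyi, lx, ly, lxi, lxi, lxi, lyi, lx, lx]"], simp add: wcomp, simp add: wcomp, simp add: wcomp)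
    apply (rule S_M2m[where w="[lx, lyi]" and g="[]" and r2'="[lx, ly, lxi, lxi, lxi, lxi, lyi, lx, lx]"], simp add: wcomp, simp add: wcomp, simp add: wcomp)
    apply (rule S_M1p[where w="[lxi]" and g="[lxi]" and r1'="[ly, lx, lyi, lxi, lyi, lx]"], simp add: wcomp, simp add: wcomp, simp add: wcomp)
    apply (rule S_M2p[where w="[lx, ly, lxi, lxi, lxi, lxi, lyi]" and g="[]" and r2'="[lx, lx, lx, ly, lxi, lxi, lxi, lyi, lxi, lyi, lx]"], simp add: wcomp, simp add: wcomp, simp add: wcomp)
    apply (rule S_M2p[where w="[lx, lx, lx, ly, lxi, lxi, lxi, lyi]" and g="[lxi]" and r2'="[lyi, lx, lx, lx, lx, ly, lxi, lxi, lyi, lxi, lyi]"], simp add: wcomp, simp add: wcomp, simp add: wcomp)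
    apply (rule S_M2p[where w="[lyi, lx, lx, lx, lx, ly, lxi, lxi, lyi]" and g="[lxi]" and r2'="[lyi, lyi, lx, lx, lx, lx, ly, lxi, lyi, lxi, lyi]"], simp add: wcomp, simp add: wcomp, simp add: wcomp)
    apply (rule S_M2p[where w="[lyi, lyi, lx, lx, lx, lx, ly, lxi, lyi]" and g="[lxi]" and r2'="[lyi, lyi, lyi, lx, lx, lx, lyi]"], simp add: wcomp, simp add: wcomp, simp add: wcomp)
    apply (rule S_C1[where g="[ly, lx, lyi, lxi, lyi]" and r1'="[lx, ly, lx, lyi, lxi, lyi]"], simp add: wcomp, simp add: wcomp)
    apply (rule S_C2[where g="[lyi, lyi, lyi]" and r2'="[lx, lx, lx, lyi, lyi, lyi, lyi]"], simp add: wcomp, simp add: wcomp)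
    by (simp add: wcomp ac_refl)
qed

lemma path_n_b_bA: "ac_equiv (imgp [lx] [ly, lx] AK3) AK3"
proof -
  have e: "imgp [lx] [ly, lx] AK3 = ([lx, ly, lx, lyi, lxi, lxi, lyi], [lx, lx, lyi, lxi, lyi, lxi, lyi, lxi, lyi])" by (simp add: wcomp)
  show ?thesis unfolding e
    apply (rule S_M1m[where w="[lx, ly, lx, lyi]" and g="[]" and r1'="[lxi, lxi, lyi, lx, ly, lx, lx, ly, lx, ly, lx, ly, lxi, lxi]"], simp add: wcomp, simp add: wcomp, simp add: wcomp)
    apply (rule S_M1p[where w="[lxi, lxi, lyi, lx, ly, lx, lx]" and g="[ly, lx, ly, lx, ly]" and r1'="[lxi, lxi, lxi, lxi, lyi, lx, ly, lx, lx, lx, lx, lyi, lxi]"], simp add: wcomp, simp add: wcomp, simp add: wcomp)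
    apply (rule S_M2m[where w="[lx, lx, lyi, lxi]" and g="[]" and r2'="[lyi, lxi, lyi, lxi, lyi, lxi, lxi, lyi, lxi, ly, lx, lx, lx, lx]"], simp add: wcomp, simp add: wcomp, simp add: wcomp)
    apply (rule S_M2m[where w="[lyi, lxi]" and g="[]" and r2'="[lyi, lxi, lyi, lxi, lxi, lyi, lxi, lxi, ly, lx, lx, lx, lx]"], simp add: wcomp, simp add: wcomp, simp add: wcomp)
    apply (rule S_M2m[where w="[lyi, lxi]" and g="[]" and r2'="[lyi, lxi, lxi, lyi, lxi, lxi, lxi, ly, lx, lx, lx, lx]"], simp add: wcomp, simp add: wcomp, simp add: wcomp)
    apply (rule S_M1m[where w="[lxi, lxi, lxi, lxi, lyi, lx, ly, lx, lx, lx, lx]" and g="[lyi, lxi, lxi]" and r1'="[lxi, lxi, lxi, lyi, lx, lx, lx, lx, ly]"], simp add: wcomp, simp add: wcomp, simp add: wcomp)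
    apply (rule S_M2p[where w="[]" and g="[lyi, lxi, lxi]" and r2'="[lyi, lxi, lxi, lxi, ly, lx, lyi, lx, lx]"], simp add: wcomp, simp add: wcomp, simp add: wcomp)
    apply (rule S_M1p[where w="[]" and g="[lxi, lxi]" and r1'="[lxi, lyi, lx, ly, lx, lyi]"], simp add: wcomp, simp add: wcomp, simp add: wcomp)
    apply (rule S_M2p[where w="[lyi, lxi, lxi, lxi, ly, lx]" and g="[]" and r2'="[lyi, lx, lx, lyi, lxi, lxi, ly, lx, lyi]"], simp add: wcomp, simp add: wcomp, simp add: wcomp)
    apply (rule S_M2p[where w="[lyi, lx, lx, lyi, lxi, lxi, ly, lx]" and g="[]" and r2'="[lyi, lyi, lx, lx, lyi, lxi, ly, lx, lyi]"], simp add: wcomp, simp add: wcomp, simp add: wcomp)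
    apply (rule S_M2p[where w="[lyi, lyi, lx, lx, lyi, lxi, ly, lx]" and g="[]" and r2'="[lyi, lyi, lyi, lx, lx, lx, lyi]"], simp add: wcomp, simp add: wcomp, simp add: wcomp)
    apply (rule S_C1[where g="[lxi, lyi]" and r1'="[lx, ly, lx, lyi, lxi, lyi]"], simp add: wcomp, simp add: wcomp)
    apply (rule S_C2[where g="[lyi, lyi, lyi]" and r2'="[lx, lx, lx, lyi, lyi, lyi, lyi]"], simp add: wcomp, simp add: wcomp)
    by (simp add: wcomp ac_refl)
qed

lemma path_n_b_ab: "ac_equiv (imgp [lx] [lxi, ly] AK3) AK3"
proof -
  have e: "imgp [lx] [lxi, ly] AK3 = ([ly, lx, lyi, lyi, lx], [lx, lx, lx, lyi, lx, lyi, lx, lyi, lx, lyi, lx])" by (simp add: wcomp)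
  show ?thesis unfolding e
    apply (rule S_M1m[where w="[]" and g="[]" and r1'="[ly, lx, lyi, lxi, ly, lxi, ly, lxi, ly, lxi, lxi, lxi]"], simp add: wcomp, simp add: wcomp, simp add: wcomp)
    apply (rule S_M1p[where w="[ly, lx, lyi]" and g="[lxi, ly, lxi, ly, lxi, ly, lxi]" and r1'="[lxi, lxi, ly, lx, lyi, lx, lx, lx, lyi]"], simp add: wcomp, simp add: wcomp, simp add: wcomp)
    apply (rule S_M2m[where w="[lx, lx, lx, lyi]" and g="[]" and r2'="[lx, lyi, lx, lyi, lx, lyi, lx, ly, lxi, lyi, lx, lx]"], simp add: wcomp, simp add: wcomp, simp add: wcomp)
    apply (rule S_M2m[where w="[lx, lyi]" and g="[]" and r2'="[lx, lyi, lx, lyi, lx, ly, lxi, lxi, lyi, lx, lx]"], simp add: wcomp, simp add: wcomp, simp add: wcomp)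
    apply (rule S_M2m[where w="[lx, lyi]" and g="[]" and r2'="[lx, lyi, lx, ly, lxi, lxi, lxi, lyi, lx, lx]"], simp add: wcomp, simp add: wcomp, simp add: wcomp)
    apply (rule S_M2m[where w="[lx, lyi]" and g="[]" and r2'="[lx, ly, lxi, lxi, lxi, lxi, lyi, lx, lx]"], simp add: wcomp, simp add: wcomp, simp add: wcomp)
    apply (rule S_M1p[where w="[lxi]" and g="[lxi]" and r1'="[ly, lx, lyi, lxi, lyi, lx]"], simp add: wcomp, simp add: wcomp, simp add: wcomp)
    apply (rule S_M2p[where w="[lx, ly, lxi, lxi, lxi, lxi, lyi]" and g="[]" and r2'="[lx, lx, lx, ly, lxi, lxi, lxi, lyi, lxi, lyi, lx]"], simp add: wcomp, simp add: wcomp, simp add: wcomp)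
    apply (rule S_M2p[where w="[lx, lx, lx, ly, lxi, lxi, lxi, lyi]" and g="[lxi]" and r2'="[lyi, lx, lx, lx, lx, ly, lxi, lxi, lyi, lxi, lyi]"], simp add: wcomp, simp add: wcomp, simp add: wcomp)
    apply (rule S_M2p[where w="[lyi, lx, lx, lx, lx, ly, lxi, lxi, lyi]" and g="[lxi]" and r2'="[lyi, lyi, lx, lx, lx, lx, ly, lxi, lyi, lxi, lyi]"], simp add: wcomp, simp add: wcomp, simp add: wcomp)
    apply (rule S_M2p[where w="[lyi, lyi, lx, lx, lx, lx, ly, lxi, lyi]" and g="[lxi]" and r2'="[lyi, lyi, lyi, lx, lx, lx, lyi]"], simp add: wcomp, simp add: wcomp, simp add: wcomp)
    apply (rule S_C1[where g="[ly, lx, lyi, lxi, lyi]" and r1'="[lx, ly, lx, lyi, lxi, lyi]"], simp add: wcomp, simp add: wcomp)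
    apply (rule S_C2[where g="[lyi, lyi, lyi]" and r2'="[lx, lx, lx, lyi, lyi, lyi, lyi]"], simp add: wcomp, simp add: wcomp)
    by (simp add: wcomp ac_refl)
qed

lemma path_n_b_Ab: "ac_equiv (imgp [lx] [lx, ly] AK3) AK3"
proof -
  have e: "imgp [lx] [lx, ly] AK3 = ([lx, lx, ly, lx, lyi, lxi, lxi, lyi, lxi], [lx, lx, lx, lyi, lxi, lyi, lxi, lyi, lxi, lyi, lxi])" by (simp add: wcomp)
  show ?thesis unfolding e
    apply (rule S_C1[where g="[lx]" and r1'="[lx, ly, lx, lyi, lxi, lxi, lyi]"], simp add: wcomp, simp add: wcomp)
    apply (rule S_C2[where g="[lx]" and r2'="[lx, lx, lyi, lxi, lyi, lxi, lyi, lxi, lyi]"], simp add: wcomp, simp add: wcomp)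
    apply (rule S_M1m[where w="[lx, ly, lx, lyi]" and g="[]" and r1'="[lxi, lxi, lyi, lx, ly, lx, lx, ly, lx, ly, lx, ly, lxi, lxi]"], simp add: wcomp, simp add: wcomp, simp add: wcomp)
    apply (rule S_M1p[where w="[lxi, lxi, lyi, lx, ly, lx, lx]" and g="[ly, lx, ly, lx, ly]" and r1'="[lxi, lxi, lxi, lxi, lyi, lx, ly, lx, lx, lx, lx, lyi, lxi]"], simp add: wcomp, simp add: wcomp, simp add: wcomp)
    apply (rule S_M2m[where w="[lx, lx, lyi, lxi]" and g="[]" and r2'="[lyi, lxi, lyi, lxi, lyi, lxi, lxi, lyi, lxi, ly, lx, lx, lx, lx]"], simp add: wcomp, simp add: wcomp, simp add: wcomp)
    apply (rule S_M2m[where w="[lyi, lxi]" and g="[]" and r2'="[lyi, lxi, lyi, lxi, lxi, lyi, lxi, lxi, ly, lx, lx, lx, lx]"], simp add: wcomp, simp add: wcomp, simp add: wcomp)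
    apply (rule S_M2m[where w="[lyi, lxi]" and g="[]" and r2'="[lyi, lxi, lxi, lyi, lxi, lxi, lxi, ly, lx, lx, lx, lx]"], simp add: wcomp, simp add: wcomp, simp add: wcomp)
    apply (rule S_M1m[where w="[lxi, lxi, lxi, lxi, lyi, lx, ly, lx, lx, lx, lx]" and g="[lyi, lxi, lxi]" and r1'="[lxi, lxi, lxi, lyi, lx, lx, lx, lx, ly]"], simp add: wcomp, simp add: wcomp, simp add: wcomp)
    apply (rule S_M2p[where w="[]" and g="[lyi, lxi, lxi]" and r2'="[lyi, lxi, lxi, lxi, ly, lx, lyi, lx, lx]"], simp add: wcomp, simp add: wcomp, simp add: wcomp)
    apply (rule S_M1p[where w="[]" and g="[lxi, lxi]" and r1'="[lxi, lyi, lx, ly, lx, lyi]"], simp add: wcomp, simp add: wcomp, simp add: wcomp)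
    apply (rule S_M2p[where w="[lyi, lxi, lxi, lxi, ly, lx]" and g="[]" and r2'="[lyi, lx, lx, lyi, lxi, lxi, ly, lx, lyi]"], simp add: wcomp, simp add: wcomp, simp add: wcomp)
    apply (rule S_M2p[where w="[lyi, lx, lx, lyi, lxi, lxi, ly, lx]" and g="[]" and r2'="[lyi, lyi, lx, lx, lyi, lxi, ly, lx, lyi]"], simp add: wcomp, simp add: wcomp, simp add: wcomp)
    apply (rule S_M2p[where w="[lyi, lyi, lx, lx, lyi, lxi, ly, lx]" and g="[]" and r2'="[lyi, lyi, lyi, lx, lx, lx, lyi]"], simp add: wcomp, simp add: wcomp, simp add: wcomp)
    apply (rule S_C1[where g="[lxi, lyi]" and r1'="[lx, ly, lx, lyi, lxi, lyi]"], simp add: wcomp, simp add: wcomp)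
    apply (rule S_C2[where g="[lyi, lyi, lyi]" and r2'="[lx, lx, lx, lyi, lyi, lyi, lyi]"], simp add: wcomp, simp add: wcomp)
    by (simp add: wcomp ac_refl)
qed

fun canc_aux :: "word \<Rightarrow> word \<Rightarrow> nat" where
  "canc_aux (x # xs) (y # ys) = (if inverse_letters x y then Suc (canc_aux xs ys) else 0)"
| "canc_aux _ _ = 0"

definition canc :: "word \<Rightarrow> word \<Rightarrow> nat" where
  "canc u v = canc_aux (rev u) v"

lemma canc_aux_le: "canc_aux xs ys \<le> length xs" "canc_aux xs ys \<le> length ys"
  by (induction xs ys rule: canc_aux.induct) auto

lemma canc_le: "canc u v \<le> length u" "canc u v \<le> length v"
  using canc_aux_le[of "rev u" v] by (simp_all add: canc_def)

lemma canc_aux_nth: "j < canc_aux xs ys \<Longrightarrow> inverse_letters (xs ! j) (ys ! j)"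
proof (induction xs ys arbitrary: j rule: canc_aux.induct)
  case (1 x xs y ys) thus ?case by (cases j) (auto split: if_splits)
qed auto

lemma canc_aux_take2: "canc_aux xs (take m ys) = min m (canc_aux xs ys)"
proof (induction xs ys arbitrary: m rule: canc_aux.induct)
  case (1 x xs y ys) thus ?case by (cases m) auto
qed auto

lemma canc_aux_take1: "canc_aux (take m xs) ys = min m (canc_aux xs ys)"
proof (induction xs ys arbitrary: m rule: canc_aux.induct)
  case (1 x xs y ys) thus ?case by (cases m) auto
next
  case ("2_1" ys) thus ?case by simp
next
  case ("2_2" v) thus ?case by (cases m) simp_all
qed

lemma canc_aux_append2: "canc_aux xs ys < length ys \<Longrightarrow> canc_aux xs (ys @ zs) = canc_aux xs ys"
proof (induction xs ys rule: canc_aux.induct)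
  case (1 x xs y ys) thus ?case by (auto split: if_splits)
next
  case ("2_1" ys) thus ?case by simp
next
  case ("2_2" v) thus ?case by simp
qed

lemma reduced_appendD1: "reduced (u @ v) \<Longrightarrow> reduced u"
  unfolding reduced_def
proof (intro allI impI)
  fix i assume h: "\<forall>i. Suc i < length (u @ v) \<longrightarrow> \<not> inverse_letters ((u @ v) ! i) ((u @ v) ! Suc i)"
    and i: "Suc i < length u"
  from h[rule_format, of i] i show "\<not> inverse_letters (u ! i) (u ! Suc i)" by (simp add: nth_append)
qed

lemma reduced_appendD2: "reduced (u @ v) \<Longrightarrow> reduced v"
  unfolding reduced_def
proof (intro allI impI)
  fix i assume h: "\<forall>i. Suc i < length (u @ v) \<longrightarrow> \<not> inverse_letters ((u @ v) ! i) ((u @ v) ! Suc i)"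
    and i: "Suc i < length v"
  from h[rule_format, of "length u + i"] i show "\<not> inverse_letters (v ! i) (v ! Suc i)" by (simp add: nth_append)
qed

lemma foldr_push_canc:
  assumes "reduced u" "reduced v"
  shows "foldr push u v = take (length u - canc u v) u @ drop (canc u v) v"
  using assms
proof (induction u arbitrary: v rule: rev_induct)
  case Nil thus ?case by (simp add: canc_def)
next
  case (snoc a u)
  have ru: "reduced u" using snoc.prems(1) by (rule reduced_appendD1)
  show ?case
  proof (cases v)
    case Nil
    have "foldr push u [a] = take (length u - canc u [a]) u @ drop (canc u [a]) [a]"
      using snoc ru by simp
    moreover have "canc u [a] = 0"
    proof (cases u rule: rev_cases)
      case Nil thus ?thesis by (simp add: canc_def)
    next
      case (snoc u' c)
      have "\<not> inverse_letters c a"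
        using snoc.prems(1)[unfolded snoc reduced_def, rule_format, of "length u'"]
        by (simp add: nth_append)
      thus ?thesis using snoc by (simp add: canc_def)
    qed
    ultimately show ?thesis using Nil by (simp add: canc_def)
  next
    case (Cons b v')
    have rv': "reduced v'" using snoc.prems Cons reduced_ConsD by blast
    show ?thesis
    proof (cases "inverse_letters a b")
      case True
      have "foldr push (u @ [a]) v = foldr push u v'" using Cons True by simp
      also have "\<dots> = take (length u - canc u v') u @ drop (canc u v') v'" using snoc.IH ru rv' by simp
      finally show ?thesis using Cons True
        by (simp add: canc_def canc_le)
    next
      case False
      have av: "reduced (a # v)" using Cons False snoc.prems by simp
      have "foldr push (u @ [a]) v = foldr push u (a # v)" using Cons False by simp
      also have "\<dots> = take (length u - canc u (a # v)) u @ drop (canc u (a # v)) (a # v)"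
        using snoc.IH ru av by simp
      also have "canc u (a # v) = 0"
      proof (cases u rule: rev_cases)
        case Nil thus ?thesis by (simp add: canc_def)
      next
        case (snoc u' c)
        have "\<not> inverse_letters c a"
          using snoc.prems(1)[unfolded snoc reduced_def, rule_format, of "length u'"]
          by (simp add: nth_append)
        thus ?thesis using snoc by (simp add: canc_def)
      qed
      finally show ?thesis using Cons False by (simp add: canc_def)
    qed
  qed
qed

lemma wmult_canc:
  assumes "reduced u" "reduced v"
  shows "wmult u v = take (length u - canc u v) u @ drop (canc u v) v"
  using assms by (simp add: wmult_def reduce_append reduce_reduced foldr_push_canc)

lemma length_wmult:
  assumes "reduced u" "reduced v"
  shows "length (wmult u v) = length u + length v - 2 * canc u v"
  using wmult_canc[OF assms] canc_le[of u v] by simp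

lemma canc_self:
  assumes r: "reduced t" and ne: "t \<noteq> []"
  shows "2 * canc t t < length t"
proof (rule ccontr)
  let ?n = "length t" and ?k = "canc t t"
  assume "\<not> 2 * ?k < ?n"
  hence k: "?n \<le> 2 * ?k" by simp
  have nth: "\<And>j. j < ?k \<Longrightarrow> inverse_letters (t ! (?n - Suc j)) (t ! j)"
  proof -
    fix j assume j: "j < ?k"
    hence "j < ?n" using canc_le[of t t] by simp
    thus "inverse_letters (t ! (?n - Suc j)) (t ! j)"
      using canc_aux_nth[of j "rev t" t] j by (simp add: canc_def rev_nth)
  qed
  show False
  proof (cases "even ?n")
    case True
    then obtain m where m: "?n = 2 * m" by blast
    have m0: "m \<ge> 1" using ne m by (cases m) auto
    have "inverse_letters (t ! (?n - Suc (m - 1))) (t ! (m - 1))" using nth[of "m - 1"] k m m0 by simp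
    moreover have "?n - Suc (m - 1) = Suc (m - 1)" using m m0 by simp
    ultimately have "inverse_letters (t ! (m - 1)) (t ! Suc (m - 1))"
      using inverse_letters_sym by metis
    moreover have "Suc (m - 1) < ?n" using m m0 by simp
    ultimately show False using r unfolding reduced_def by blast
  next
    case False
    then obtain m where m: "?n = 2 * m + 1" by (metis oddE)
    have "inverse_letters (t ! (?n - Suc m)) (t ! m)" using nth[of m] k m by simp
    moreover have "?n - Suc m = m" using m by simp
    ultimately show False by (simp add: inverse_letters_def)
  qed
qed

definition H2 :: "word \<Rightarrow> word \<Rightarrow> bool" where
  "H2 a b \<longleftrightarrow> (\<forall>l0 l l'. \<not> inverse_letters l0 l \<longrightarrow> \<not> inverse_letters l l' \<longrightarrow>
     canc (limg a b l0) (limg a b l) + canc (limg a b l) (limg a b l') < length (limg a b l))"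

lemma H2D: "H2 a b \<Longrightarrow> \<not> inverse_letters l0 l \<Longrightarrow> \<not> inverse_letters l l' \<Longrightarrow>
     canc (limg a b l0) (limg a b l) + canc (limg a b l) (limg a b l') < length (limg a b l)"
  unfolding H2_def by blast

lemma canc_take2: "canc u (take m t) = min m (canc u t)"
  by (simp add: canc_def canc_aux_take2)

lemma canc_append2: "canc u t < length t \<Longrightarrow> canc u (t @ W) = canc u t"
  by (simp add: canc_def canc_aux_append2)

lemma not_inverse_self[simp]: "\<not> inverse_letters l l" by (simp add: inverse_letters_def)

lemma lp_inv:
  assumes ab: "reduced a" "reduced b" and h: "H2 a b"
  shows "reduced (l # w) \<Longrightarrow> \<exists>W. img a b (l # w) =
     take (length (limg a b l) - (case w of [] \<Rightarrow> 0 | l' # _ \<Rightarrow> canc (limg a b l) (limg a b l'))) (limg a b l) @ W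
     \<and> length w \<le> length W"
proof (induction w arbitrary: l)
  case Nil
  show ?case using ab by (intro exI[of _ "[]"]) (simp add: img_Cons reduced_limg reduce_reduced)
next
  case (Cons l' w'')
  let ?L = "limg a b"
  have rl': "reduced (l' # w'')" using Cons.prems reduced_ConsD by blast
  have nil: "\<not> inverse_letters l l'" using Cons.prems by simp
  define c' where "c' = (case w'' of [] \<Rightarrow> 0 | l'' # _ \<Rightarrow> canc (?L l') (?L l''))"
  from Cons.IH[OF rl'] obtain W where
    W: "img a b (l' # w'') = take (length (?L l') - c') (?L l') @ W" "length w'' \<le> length W"
    unfolding c'_def by blast
  define c where "c = canc (?L l) (?L l')"
  have hc: "c + c' < length (?L l')"
  proof (cases w'')
    case Nil
    have "canc (?L l) (?L l') + canc (?L l') (?L l') < length (?L l')" using H2D[OF h] nil by simp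
    thus ?thesis unfolding c_def c'_def Nil by simp
  next
    case (Cons l'' w3)
    have "\<not> inverse_letters l' l''" using rl' Cons by simp
    thus ?thesis using H2D[OF h] nil unfolding c_def c'_def Cons by simp
  qed
  define T where "T = take (length (?L l') - c') (?L l')"
  have lT: "length T = length (?L l') - c'" unfolding T_def using hc by simp
  have cT: "canc (?L l) T = c" unfolding T_def canc_take2 c_def[symmetric] using hc by simp
  have cTW: "canc (?L l) (T @ W) = c" using cT hc lT by (simp add: canc_append2)
  have rTW: "reduced (T @ W)" using W(1) T_def by (metis reduced_img)
  have "img a b (l # l' # w'') = wmult (?L l) (T @ W)" using W(1) T_def by (simp add: img_Cons)
  also have "\<dots> = take (length (?L l) - c) (?L l) @ drop c (T @ W)"
    using wmult_canc[OF reduced_limg[OF ab] rTW] cTW by simp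
  also have "drop c (T @ W) = drop c T @ W" using hc lT by simp
  finally show ?case using lT hc W(2) c_def
    by (intro exI[of _ "drop c T @ W"]) simp
qed

lemma lp:
  assumes ab: "reduced a" "reduced b" and h: "H2 a b" and w: "reduced w" "w \<noteq> []"
  shows "length w \<le> length (img a b w)"
proof -
  obtain l w' where lw: "w = l # w'" using w(2) by (cases w) auto
  let ?L = "limg a b"
  let ?cw = "(case w' of [] \<Rightarrow> 0 | l' # _ \<Rightarrow> canc (?L l) (?L l'))"
  obtain W where W: "img a b w = take (length (?L l) - ?cw) (?L l) @ W" "length w' \<le> length W"
    using lp_inv[OF ab h, of l w'] w lw by blast
  have "?cw < length (?L l)"
  proof (cases w')
    case Nil
    have "canc (?L l) (?L l) + canc (?L l) (?L l) < length (?L l)" using H2D[OF h] by simp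
    thus ?thesis using Nil by (cases "limg a b l") simp_all
  next
    case (Cons l' w3)
    have "\<not> inverse_letters l l'" using w lw Cons by simp
    hence "canc (?L l) (?L l) + canc (?L l) (?L l') < length (?L l)" using H2D[OF h] by simp
    thus ?thesis using Cons by simp
  qed
  thus ?thesis using W lw by simp
qed

definition surjw :: "word \<Rightarrow> word \<Rightarrow> bool" where
  "surjw a b \<longleftrightarrow> (\<forall>z. reduced z \<longrightarrow> (\<exists>w. img a b w = z))"

lemma reduced_conjw[simp]: "reduced (conjw p x)" by (simp add: conjw_def)

lemma conjw_winv: "conjw p (winv x) = winv (conjw p x)"
  by (simp add: conjw_def winv_wmult wmult_assoc)

lemma conjw_wmult: "conjw p (wmult x y) = wmult (conjw p x) (conjw p y)"
  by (simp add: conjw_def wmult_assoc)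

lemma conjw_Nil[simp]: "conjw p [] = []"
  by (simp add: conjw_def)

lemma conjw_conjw_inv: "conjw p (conjw (winv p) x) = reduce x"
  by (simp add: conjw_def wmult_assoc)

lemma conjw_inv_conjw: "conjw (winv p) (conjw p x) = reduce x"
  by (simp add: conjw_def wmult_assoc)

lemma conjw_Nil_left: "reduced x \<Longrightarrow> conjw [] x = x"
  by (simp add: conjw_def reduce_reduced)

lemma img_conj_pair:
  assumes "reduced x" "reduced y"
  shows "img (conjw g x) (conjw g y) w = conjw g (img x y w)"
proof (induction w)
  case Nil thus ?case by simp
next
  case (Cons l w)
  have "limg (conjw g x) (conjw g y) l = conjw g (limg x y l)"
    by (cases l rule: letter_cases) (simp_all add: conjw_winv)
  thus ?case using Cons by (simp add: img_Cons conjw_wmult)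
qed

definition redok :: "word \<Rightarrow> word \<Rightarrow> bool" where
  "redok a b \<longleftrightarrow> (\<exists>a1 b1 c d p. reduced a1 \<and> reduced b1 \<and> reduced p \<and>
     img a1 b1 c = a \<and> img a1 b1 d = b \<and> ac_equiv (imgp c d AK3) AK3 \<and>
     length (conjw p a1) + length (conjw p b1) < length a + length b)"

lemma redokI:
  "reduced ap \<Longrightarrow> reduced bp \<Longrightarrow> reduced p \<Longrightarrow> img ap bp c = a \<Longrightarrow> img ap bp d = b \<Longrightarrow>
   ac_equiv (imgp c d AK3) AK3 \<Longrightarrow> length (conjw p ap) + length (conjw p bp) < length a + length b \<Longrightarrow> redok a b"
  unfolding redok_def by blast

lemma nstep:
  assumes IH: "\<And>a' b'. length a' + length b' < length a + length b \<Longrightarrow> reduced a' \<Longrightarrow> reduced b' \<Longrightarrow>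
                 surjw a' b' \<Longrightarrow> ac_equiv (imgp a' b' AK3) AK3"
    and ab: "reduced a" "reduced b" and sj: "surjw a b" and ok: "redok a b"
  shows "ac_equiv (imgp a b AK3) AK3"
proof -
  obtain a1 b1 c d p where r: "reduced a1" "reduced b1" "reduced p" and
    ca: "img a1 b1 c = a" and db: "img a1 b1 d = b" and path: "ac_equiv (imgp c d AK3) AK3" and
    len: "length (conjw p a1) + length (conjw p b1) < length a + length b"
    using ok unfolding redok_def by blast
  define a' where "a' = conjw p a1"
  define b' where "b' = conjw p b1"
  have a1: "a1 = conjw (winv p) a'" unfolding a'_def using r by (simp add: conjw_inv_conjw reduce_reduced)
  have b1: "b1 = conjw (winv p) b'" unfolding b'_def using r by (simp add: conjw_inv_conjw reduce_reduced)
  have i1: "\<And>w. img a1 b1 w = conjw (winv p) (img a' b' w)"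
    unfolding a1 b1 by (simp add: img_conj_pair a'_def b'_def)
  have comp: "\<And>w. img a1 b1 (img c d w) = img a b w"
    using r by (simp add: img_comp ca db)
  have sj': "surjw a' b'" unfolding surjw_def
  proof (intro allI impI)
    fix z :: word assume z: "reduced z"
    obtain w where "img a b w = conjw (winv p) z" using sj reduced_conjw unfolding surjw_def by blast
    hence "conjw (winv p) (img a' b' (img c d w)) = conjw (winv p) z" using comp i1 by simp
    hence "conjw p (conjw (winv p) (img a' b' (img c d w))) = conjw p (conjw (winv p) z)" by simp
    hence "img a' b' (img c d w) = z" using z by (simp add: conjw_conjw_inv reduce_reduced)
    thus "\<exists>w. img a' b' w = z" by blast
  qed
  have e1: "imgp a b AK3 = imgp a1 b1 (imgp c d AK3)" using comp by (simp add: imgp_def)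
  have s1: "ac_equiv (imgp a b AK3) (imgp a1 b1 AK3)"
    unfolding e1 using ac_equiv_img[OF r(1,2) path] .
  have s2: "ac_equiv (imgp a1 b1 AK3) (imgp a' b' AK3)"
    unfolding imgp_def i1 fst_conv snd_conv
    apply (rule S_C1[of p], rule r, rule refl)
    apply (rule S_C2[of p], rule r, rule refl)
    by (simp add: conjw_conjw_inv reduce_reduced ac_refl)
  have s3: "ac_equiv (imgp a' b' AK3) AK3"
    using IH[of a' b'] len sj' unfolding a'_def b'_def by simp
  show ?thesis using s1 s2 s3 ac_trans by blast
qed

lemmas mvsimps = img_Cons wmult_assoc reduce_reduced reduced_winv wmult_Nil_right'

lemma mv_n_ab: "reduced a \<Longrightarrow> reduced b \<Longrightarrow> img (wmult a b) b [lx, lyi] = a \<and> img (wmult a b) b [ly] = b"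
  by (simp add: mvsimps)
lemma mv_n_aB: "reduced a \<Longrightarrow> reduced b \<Longrightarrow> img (wmult a (winv b)) b [lx, ly] = a \<and> img (wmult a (winv b)) b [ly] = b"
  by (simp add: mvsimps)
lemma mv_n_ba: "reduced a \<Longrightarrow> reduced b \<Longrightarrow> img (wmult b a) b [lyi, lx] = a \<and> img (wmult b a) b [ly] = b"
  by (simp add: mvsimps)
lemma mv_n_Ba: "reduced a \<Longrightarrow> reduced b \<Longrightarrow> img (wmult (winv b) a) b [ly, lx] = a \<and> img (wmult (winv b) a) b [ly] = b"
  by (simp add: mvsimps)
lemma mv_n_b_ba: "reduced a \<Longrightarrow> reduced b \<Longrightarrow> img a (wmult b a) [lx] = a \<and> img a (wmult b a) [ly, lxi] = b"
  by (simp add: mvsimps)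
lemma mv_n_b_bA: "reduced a \<Longrightarrow> reduced b \<Longrightarrow> img a (wmult b (winv a)) [lx] = a \<and> img a (wmult b (winv a)) [ly, lx] = b"
  by (simp add: mvsimps)
lemma mv_n_b_ab: "reduced a \<Longrightarrow> reduced b \<Longrightarrow> img a (wmult a b) [lx] = a \<and> img a (wmult a b) [lxi, ly] = b"
  by (simp add: mvsimps)
lemma mv_n_b_Ab: "reduced a \<Longrightarrow> reduced b \<Longrightarrow> img a (wmult (winv a) b) [lx] = a \<and> img a (wmult (winv a) b) [lx, ly] = b"
  by (simp add: mvsimps)

lemma lw1: "length (wmult (winv u) v) = length (wmult (winv v) u)"
  by (metis length_winv winv_wmult winv_winv)
lemma lw2: "length (wmult u (winv v)) = length (wmult v (winv u))"
  by (metis length_winv winv_wmult winv_winv)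
lemma lw3: "length (wmult (winv u) (winv v)) = length (wmult v u)"
  by (metis length_winv winv_wmult)

lemma ok_ab: "reduced a \<Longrightarrow> reduced b \<Longrightarrow> length (wmult a b) < length a \<Longrightarrow> redok a b"
  by (rule redokI[where ap="wmult a b" and bp=b and c="[lx, lyi]" and d="[ly]" and p="[]"])
     (simp_all add: mv_n_ab path_n_ab conjw_Nil_left)
lemma ok_aB: "reduced a \<Longrightarrow> reduced b \<Longrightarrow> length (wmult a (winv b)) < length a \<Longrightarrow> redok a b"
  by (rule redokI[where ap="wmult a (winv b)" and bp=b and c="[lx, ly]" and d="[ly]" and p="[]"])
     (simp_all add: mv_n_aB path_n_aB conjw_Nil_left)
lemma ok_ba: "reduced a \<Longrightarrow> reduced b \<Longrightarrow> length (wmult b a) < length a \<Longrightarrow> redok a b"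
  by (rule redokI[where ap="wmult b a" and bp=b and c="[lyi, lx]" and d="[ly]" and p="[]"])
     (simp_all add: mv_n_ba path_n_ba conjw_Nil_left)
lemma ok_Ba: "reduced a \<Longrightarrow> reduced b \<Longrightarrow> length (wmult (winv b) a) < length a \<Longrightarrow> redok a b"
  by (rule redokI[where ap="wmult (winv b) a" and bp=b and c="[ly, lx]" and d="[ly]" and p="[]"])
     (simp_all add: mv_n_Ba path_n_Ba conjw_Nil_left)
lemma ok_b_ba: "reduced a \<Longrightarrow> reduced b \<Longrightarrow> length (wmult b a) < length b \<Longrightarrow> redok a b"
  by (rule redokI[where ap=a and bp="wmult b a" and c="[lx]" and d="[ly, lxi]" and p="[]"])
     (simp_all add: mv_n_b_ba path_n_b_ba conjw_Nil_left)
lemma ok_b_bA: "reduced a \<Longrightarrow> reduced b \<Longrightarrow> length (wmult b (winv a)) < length b \<Longrightarrow> redok a b"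
  by (rule redokI[where ap=a and bp="wmult b (winv a)" and c="[lx]" and d="[ly, lx]" and p="[]"])
     (simp_all add: mv_n_b_bA path_n_b_bA conjw_Nil_left)
lemma ok_b_ab: "reduced a \<Longrightarrow> reduced b \<Longrightarrow> length (wmult a b) < length b \<Longrightarrow> redok a b"
  by (rule redokI[where ap=a and bp="wmult a b" and c="[lx]" and d="[lxi, ly]" and p="[]"])
     (simp_all add: mv_n_b_ab path_n_b_ab conjw_Nil_left)
lemma ok_b_Ab: "reduced a \<Longrightarrow> reduced b \<Longrightarrow> length (wmult (winv a) b) < length b \<Longrightarrow> redok a b"
  by (rule redokI[where ap=a and bp="wmult (winv a) b" and c="[lx]" and d="[lx, ly]" and p="[]"])
     (simp_all add: mv_n_b_Ab path_n_b_Ab conjw_Nil_left)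

lemma n1_i:
  assumes ab: "reduced a" "reduced b" and f: "fst m \<noteq> fst m'"
    and l: "length (wmult (limg a b m) (limg a b m')) < length (limg a b m)"
  shows "redok a b"
proof (cases m rule: letter_cases)
  case x then show ?thesis using f l ab by (cases m' rule: letter_cases) (auto intro: ok_ab ok_aB)
next
  case xi then show ?thesis using f l ab
    by (cases m' rule: letter_cases) (auto intro: ok_Ba ok_ba simp: lw1 lw3)
next
  case y then show ?thesis using f l ab by (cases m' rule: letter_cases) (auto intro: ok_b_ba ok_b_bA)
next
  case yi then show ?thesis using f l ab
    by (cases m' rule: letter_cases) (auto intro: ok_b_Ab ok_b_ab simp: lw1 lw3)
qed

lemma n1_ii:
  assumes ab: "reduced a" "reduced b" and f: "fst m \<noteq> fst m'"
    and l: "length (wmult (limg a b m) (limg a b m')) < length (limg a b m')"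
  shows "redok a b"
proof (cases m rule: letter_cases)
  case x then show ?thesis using f l ab
    by (cases m' rule: letter_cases) (auto intro: ok_b_ab ok_b_bA simp: lw2)
next
  case xi then show ?thesis using f l ab
    by (cases m' rule: letter_cases) (auto intro: ok_b_Ab ok_b_ba simp: lw3)
next
  case y then show ?thesis using f l ab
    by (cases m' rule: letter_cases) (auto intro: ok_ba ok_aB simp: lw2)
next
  case yi then show ?thesis using f l ab
    by (cases m' rule: letter_cases) (auto intro: ok_Ba ok_ab simp: lw3)
qed

lemma length_push_le: "length (push a x) \<le> Suc (length x)"
  by (cases x) auto

lemma length_foldr_push_le: "length (foldr push w z) \<le> length w + length z"
proof (induction w)
  case Nil thus ?case by simp
next
  case (Cons a w) thus ?case using length_push_le[of a "foldr push w z"] by simp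
qed

lemma length_wmult_le: "length (wmult u v) \<le> length u + length v"
  using length_foldr_push_le[of "u @ v" "[]"] by (simp add: wmult_def reduce_def)

lemma canc_sym_eq: "2 * canc s t = length t \<Longrightarrow> 2 * canc t s = length t \<Longrightarrow> canc t s = canc s t"
  by simp

lemma conj_len:
  assumes rs: "reduced s" and rt: "reduced t" and ne: "t \<noteq> []"
    and k1: "2 * canc s t = length t" and k2: "2 * canc t s = length t" and ts: "length t \<le> length s"
  shows "length (conjw (take (canc s t) t) t) + length (conjw (take (canc s t) t) (wmult t s)) < length t + length s"
proof -
  define k where "k = canc s t"
  define p where "p = take k t"
  define q where "q = drop k t"
  have tpq: "t = p @ q" unfolding p_def q_def by simp
  have rp: "reduced p" using rt tpq reduced_appendD1 by metis
  have rq: "reduced q" using rt tpq reduced_appendD2 by metis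
  have pq: "wmult p q = t" using rt tpq by (simp add: wmult_def reduce_reduced)
  have c1: "conjw p t = wmult q p"
    unfolding conjw_def pq[symmetric] using rq by (simp add: reduce_reduced)
  have len1: "length (conjw p t) \<le> length t"
    using c1 length_wmult_le[of q p] tpq by simp
  have kts: "canc t s = k" using k1 k2 k_def by simp
  have lp: "length p = k" using k1 k_def p_def by simp
  define ds where "ds = drop k s"
  have tk: "length t - k = k" using k1 k_def by simp
  have ts_eq: "wmult t s = p @ ds"
    using wmult_canc[OF rt rs] kts tk unfolding p_def ds_def by simp
  have rds: "reduced ds" using ts_eq reduced_appendD2 reduced_wmult by metis
  have pds: "wmult p ds = p @ ds" using ts_eq reduced_wmult by (metis reduce_reduced wmult_def)
  have c2: "conjw p (wmult t s) = wmult ds p"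
    unfolding conjw_def ts_eq pds[symmetric] using rds by (simp add: reduce_reduced)
  have cdp: "canc ds p = k"
  proof -
    have "canc ds p = canc_aux (take (length s - k) (rev s)) p"
      unfolding canc_def ds_def by (simp add: rev_drop)
    also have "\<dots> = min (length s - k) (canc_aux (rev s) p)" by (simp add: canc_aux_take1)
    also have "canc_aux (rev s) p = min k (canc s t)"
      unfolding p_def canc_aux_take2 canc_def by simp
    finally show ?thesis using k1 ts k_def by simp
  qed
  have len2: "length (conjw p (wmult t s)) = length s - 2 * k"
    unfolding c2 using length_wmult[OF rds rp] cdp lp ds_def by simp
  have "0 < length t" using ne by simp
  thus ?thesis using len1 len2 k1 ts unfolding p_def k_def by linarith
qed

lemma lcw: "length (conjw P (winv x)) = length (conjw P x)"
  by (simp add: conjw_winv)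

lemma lcw_inv_mult: "length (conjw P (wmult u v)) = length (conjw P (wmult (winv v) (winv u)))"
  by (metis lcw winv_wmult)

lemma conj_cases:
  assumes ab: "reduced a" "reduced b" and f: "fst l \<noteq> fst l0" and rP: "reduced P"
    and len: "length (conjw P (limg a b l)) + length (conjw P (wmult (limg a b l) (limg a b l0)))
              < length (limg a b l) + length (limg a b l0)"
  shows "redok a b"
proof (cases l rule: letter_cases)
  case x
  show ?thesis
  proof (cases l0 rule: letter_cases)
    case y thus ?thesis using x len ab rP
      by (intro redokI[where ap=a and bp="wmult a b" and c="[lx]" and d="[lxi, ly]" and p=P])
         (simp_all add: mv_n_b_ab path_n_b_ab)
  next
    case yi thus ?thesis using x len ab rP lcw_inv_mult[of P a "winv b"]
      by (intro redokI[where ap=a and bp="wmult b (winv a)" and c="[lx]" and d="[ly, lx]" and p=P])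
         (simp_all add: mv_n_b_bA path_n_b_bA)
  qed (use x f in simp_all)
next
  case xi
  show ?thesis
  proof (cases l0 rule: letter_cases)
    case y thus ?thesis using xi len ab rP lcw[of P a]
      by (intro redokI[where ap=a and bp="wmult (winv a) b" and c="[lx]" and d="[lx, ly]" and p=P])
         (simp_all add: mv_n_b_Ab path_n_b_Ab)
  next
    case yi thus ?thesis using xi len ab rP lcw[of P a] lcw_inv_mult[of P "winv a" "winv b"]
      by (intro redokI[where ap=a and bp="wmult b a" and c="[lx]" and d="[ly, lxi]" and p=P])
         (simp_all add: mv_n_b_ba path_n_b_ba)
  qed (use xi f in simp_all)
next
  case y
  show ?thesis
  proof (cases l0 rule: letter_cases)
    case x thus ?thesis using y len ab rP
      by (intro redokI[where ap="wmult b a" and bp=b and c="[lyi, lx]" and d="[ly]" and p=P])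
         (simp_all add: mv_n_ba path_n_ba)
  next
    case xi thus ?thesis using y len ab rP lcw_inv_mult[of P b "winv a"]
      by (intro redokI[where ap="wmult a (winv b)" and bp=b and c="[lx, ly]" and d="[ly]" and p=P])
         (simp_all add: mv_n_aB path_n_aB)
  qed (use y f in simp_all)
next
  case yi
  show ?thesis
  proof (cases l0 rule: letter_cases)
    case x thus ?thesis using yi len ab rP lcw[of P b]
      by (intro redokI[where ap="wmult (winv b) a" and bp=b and c="[ly, lx]" and d="[ly]" and p=P])
         (simp_all add: mv_n_Ba path_n_Ba)
  next
    case xi thus ?thesis using yi len ab rP lcw[of P b] lcw_inv_mult[of P "winv b" "winv a"]
      by (intro redokI[where ap="wmult a b" and bp=b and c="[lx, lyi]" and d="[ly]" and p=P])
         (simp_all add: mv_n_ab path_n_ab)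
  qed (use yi f in simp_all)
qed

lemma limg_ne: "a \<noteq> [] \<Longrightarrow> b \<noteq> [] \<Longrightarrow> limg a b l \<noteq> []"
  by (cases l rule: letter_cases) (auto simp: winv_def)

lemma same_gen: "\<not> inverse_letters m m' \<Longrightarrow> fst m = fst m' \<Longrightarrow> m = m'"
  by (auto simp: inverse_letters_def prod_eq_iff)

lemma pair_ok:
  assumes ab: "reduced a" "reduced b" "a \<noteq> []" "b \<noteq> []" and n: "\<not> inverse_letters m m'"
    and h: "length (limg a b m') < 2 * canc (limg a b m) (limg a b m') \<or>
            length (limg a b m) < 2 * canc (limg a b m) (limg a b m')"
  shows "redok a b"
proof (cases "fst m = fst m'")
  case True
  hence "m = m'" using n same_gen by blast
  thus ?thesis using h canc_self[OF reduced_limg[OF ab(1,2)] limg_ne[OF ab(3,4)], of m] by simp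
next
  case False
  have lw: "length (wmult (limg a b m) (limg a b m')) =
      length (limg a b m) + length (limg a b m') - 2 * canc (limg a b m) (limg a b m')"
    using length_wmult reduced_limg ab by blast
  have cl: "canc (limg a b m) (limg a b m') \<le> length (limg a b m)"
       "canc (limg a b m) (limg a b m') \<le> length (limg a b m')" using canc_le by blast+
  show ?thesis using h
  proof (elim disjE)
    assume "length (limg a b m') < 2 * canc (limg a b m) (limg a b m')"
    hence "length (wmult (limg a b m) (limg a b m')) < length (limg a b m)" using lw cl by linarith
    thus ?thesis using n1_i[OF ab(1,2) False] by blast
  next
    assume "length (limg a b m) < 2 * canc (limg a b m) (limg a b m')"
    hence "length (wmult (limg a b m) (limg a b m')) < length (limg a b m')" using lw cl by linarith
    thus ?thesis using n1_ii[OF ab(1,2) False] by blast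
  qed
qed

lemma inv_contra:
  assumes rt: "reduced t" and ne: "t \<noteq> []"
    and k1: "2 * canc s t = length t" and k2: "2 * canc t (winv s) = length t"
  shows False
proof -
  define k where "k = canc s t"
  have k0: "k \<ge> 1" using ne k1 k_def by (cases t) auto
  define j where "j = k - 1"
  have jk: "j < k" "Suc j = k" using k0 j_def by auto
  have ks: "k \<le> length s" using canc_le k_def by metis
  have h1: "inverse_letters (rev s ! j) (t ! j)"
    using canc_aux_nth[of j "rev s" t] jk k_def by (simp add: canc_def)
  have k2': "canc t (winv s) = k" using k1 k2 k_def by simp
  have h2: "inverse_letters (rev t ! j) (winv s ! j)"
    using canc_aux_nth[of j "rev t" "winv s"] jk k2' by (simp add: canc_def)
  have e1: "winv s ! j = t ! j"
    using h1 jk ks by (simp add: winv_nth rev_nth inverse_letters_iff)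
  have lj: "length t - Suc j = k" using k1 k_def jk by simp
  have e2: "rev t ! j = t ! k"
    using lj jk k1 k_def by (simp add: rev_nth)
  have "inverse_letters (t ! j) (t ! Suc j)" using h2 e1 e2 jk inverse_letters_sym by metis
  moreover have "Suc j < length t" using jk k1 k_def by simp
  ultimately show False using rt unfolding reduced_def by blast
qed

lemma gen_cases2: "(g1::gen) \<noteq> g \<Longrightarrow> g2 \<noteq> g \<Longrightarrow> g1 = g2"
  by (cases g1; cases g2; cases g) auto

lemma h2fail:
  assumes ab: "reduced a" "reduced b" "a \<noteq> []" "b \<noteq> []" and nh: "\<not> H2 a b"
  shows "redok a b"
proof -
  obtain l0 l l' where n0: "\<not> inverse_letters l0 l" and n1: "\<not> inverse_letters l l'"
    and ge: "\<not> canc (limg a b l0) (limg a b l) + canc (limg a b l) (limg a b l') < length (limg a b l)"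
    using nh unfolding H2_def by blast
  define s where "s = limg a b l0"
  define t where "t = limg a b l"
  define r where "r = limg a b l'"
  have rs: "reduced s" "reduced t" "reduced r" using reduced_limg ab unfolding s_def t_def r_def by blast+
  have ne: "t \<noteq> []" using limg_ne ab unfolding t_def by blast
  show ?thesis
  proof (cases "length t < 2 * canc s t \<or> length s < 2 * canc s t")
    case True thus ?thesis using pair_ok[OF ab n0] unfolding s_def t_def by blast
  next
    case F1: False
    show ?thesis
    proof (cases "length r < 2 * canc t r \<or> length t < 2 * canc t r")
      case True thus ?thesis using pair_ok[OF ab n1] unfolding r_def t_def by blast
    next
      case F2: False
      have ge': "length t \<le> canc s t + canc t r" using ge unfolding s_def t_def r_def by simp
      have c1: "2 * canc s t = length t" and c2: "2 * canc t r = length t" using F1 F2 ge' by linarith+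
      have self: "2 * canc t t < length t" using canc_self rs ne by blast
      have f0: "fst l0 \<noteq> fst l"
      proof
        assume "fst l0 = fst l"
        hence "l0 = l" using same_gen n0 by blast
        thus False using self c1 unfolding s_def t_def by simp
      qed
      have f1: "fst l' \<noteq> fst l"
      proof
        assume "fst l' = fst l"
        hence "l = l'" using same_gen n1 by metis
        thus False using self c2 unfolding r_def t_def by simp
      qed
      have f01: "fst l' = fst l0" using gen_cases2 f0 f1 by metis
      show ?thesis
      proof (cases "snd l' = snd l0")
        case False
        hence "l' = inv_l l0" using f01 by (cases l'; cases l0) (simp add: inv_l_def)
        hence "r = winv s" unfolding r_def s_def by (simp add: limg_inv_l)
        thus ?thesis using inv_contra[OF rs(2) ne c1] c2 by simp
      next
        case True
        hence "l' = l0" using f01 by (simp add: prod_eq_iff)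
        hence rs_eq: "r = s" unfolding r_def s_def by simp
        have "length t \<le> length s" using F1 c1 by linarith
        hence len: "length (conjw (take (canc s t) t) t) + length (conjw (take (canc s t) t) (wmult t s))
                      < length t + length s"
          using conj_len[OF rs(1,2) ne c1] c2 rs_eq by simp
        have rP: "reduced (take (canc s t) t)"
          using rs(2) reduced_appendD1[of "take (canc s t) t" "drop (canc s t) t"] by simp
        show ?thesis using conj_cases[OF ab(1,2) f0[symmetric] rP] len unfolding s_def t_def by blast
      qed
    qed
  qed
qed

lemma comm_winv:
  assumes "reduced z" "wmult e z = wmult z e"
  shows "wmult (winv e) z = wmult z (winv e)"
proof -
  have "wmult (winv e) z = wmult (winv e) (wmult (wmult z e) (winv e))"
    using assms by (simp add: reduce_reduced)
  also have "\<dots> = wmult (winv e) (wmult (wmult e z) (winv e))" using assms by simp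
  also have "\<dots> = wmult z (winv e)" using assms(1) by (simp add: wmult_assoc reduce_reduced)
  finally show ?thesis .
qed

lemma comm_mult:
  "wmult u z = wmult z u \<Longrightarrow> wmult v z = wmult z v \<Longrightarrow> wmult (wmult u v) z = wmult z (wmult u v)"
  by (metis wmult_assoc)

lemma N0gen:
  assumes e: "reduced e" and L: "\<And>l. limg a b l = [] \<or> limg a b l = e \<or> limg a b l = winv e"
  shows "wmult (img a b w) (img a b w') = wmult (img a b w') (img a b w)"
proof -
  have P1: "\<And>w. wmult (img a b w) e = wmult e (img a b w)"
  proof -
    fix w show "wmult (img a b w) e = wmult e (img a b w)"
    proof (induction w)
      case Nil thus ?case by simp
    next
      case (Cons l w)
      have "wmult (limg a b l) e = wmult e (limg a b l)" using L[of l] by auto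
      thus ?case using Cons comm_mult by (simp add: img_Cons)
    qed
  qed
  have P1': "\<And>w. wmult (winv e) (img a b w) = wmult (img a b w) (winv e)"
    using comm_winv P1 reduced_img by metis
  show ?thesis
  proof (induction w)
    case Nil thus ?case by (simp add: reduce_reduced)
  next
    case (Cons l w)
    have "wmult (limg a b l) (img a b w') = wmult (img a b w') (limg a b l)"
      using L[of l] P1 P1' by (auto simp: reduce_reduced)
    thus ?case using Cons comm_mult by (simp add: img_Cons)
  qed
qed

lemma N0:
  assumes ab: "reduced a" "reduced b" and sj: "surjw a b" and z: "a = [] \<or> b = []"
  shows False
proof -
  obtain w1 where w1: "img a b w1 = [lx]" using sj unfolding surjw_def by (meson reduced_single)
  obtain w2 where w2: "img a b w2 = [ly]" using sj unfolding surjw_def by (meson reduced_single)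
  have "wmult (img a b w1) (img a b w2) = wmult (img a b w2) (img a b w1)"
  proof (cases "a = []")
    case True
    have "\<And>l. limg a b l = [] \<or> limg a b l = b \<or> limg a b l = winv b"
      subgoal for l using True by (cases l rule: letter_cases) simp_all done
    thus ?thesis using N0gen[of b] ab by blast
  next
    case False
    hence "b = []" using z by simp
    have "\<And>l. limg a b l = [] \<or> limg a b l = a \<or> limg a b l = winv a"
      subgoal for l using \<open>b = []\<close> by (cases l rule: letter_cases) simp_all done
    thus ?thesis using N0gen[of a] ab by blast
  qed
  thus False using w1 w2 by (simp add: wcomp)
qed

lemma one_letter:
  assumes ab: "reduced a" "reduced b" and h: "H2 a b" and sj: "surjw a b"
    and z: "reduced z" "length z = 1"
  shows "\<exists>l. limg a b l = z"
proof -
  obtain w where w: "img a b w = z" using sj z unfolding surjw_def by blast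
  define w' where "w' = reduce w"
  have w': "img a b w' = z" using w img_reduce[OF ab] w'_def by simp
  have rw': "reduced w'" unfolding w'_def by simp
  have ne: "w' \<noteq> []" using w' z by auto
  have "length w' \<le> 1" using lp[OF ab h rw' ne] w' z by simp
  then obtain l where "w' = [l]" using ne by (cases w') auto
  thus ?thesis using w' img_single[OF ab] by metis
qed

lemma winv_single_eq: "winv a = [m] \<Longrightarrow> a = [inv_l m]"
  by (metis winv_winv winv_single)

lemma base:
  assumes ab: "reduced a" "reduced b" and h: "H2 a b" and sj: "surjw a b"
  shows "ac_equiv (imgp a b AK3) AK3"
proof -
  obtain l1 where l1: "limg a b l1 = [lx]" using one_letter[OF ab h sj, of "[lx]"] by auto
  obtain l2 where l2: "limg a b l2 = [ly]" using one_letter[OF ab h sj, of "[ly]"] by auto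
  show ?thesis using l1 l2
    by (cases l1 rule: letter_cases; cases l2 rule: letter_cases)
       (auto dest!: winv_single_eq simp: inv_l_def path_sp_xy path_sp_xY path_sp_Xy path_sp_XY
          path_sp_yx path_sp_yX path_sp_Yx path_sp_YX)
qed

lemma main:
  "reduced a \<Longrightarrow> reduced b \<Longrightarrow> surjw a b \<Longrightarrow> ac_equiv (imgp a b AK3) AK3"
proof (induction "length a + length b" arbitrary: a b rule: less_induct)
  case less
  show ?case
  proof (cases "a = [] \<or> b = []")
    case True thus ?thesis using N0 less.prems by blast
  next
    case False
    show ?thesis
    proof (cases "H2 a b")
      case True thus ?thesis using base less.prems by blast
    next
      case nh: False
      have "redok a b" using h2fail less.prems False nh by blast
      thus ?thesis using nstep[OF _ less.prems] less.hyps by blast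
    qed
  qed
qed

theorem corollary8:
  fixes u v :: word and \<phi> :: "word \<Rightarrow> word"
  assumes "u \<in> carrier FG" and "v \<in> carrier FG"
    and "ac_equiv (u, v) AK3"
    and "\<phi> \<in> iso FG FG"
  shows "ac_equiv (\<phi> u, \<phi> v) AK3"
proof -
  define a where "a = \<phi> [lx]"
  define b where "b = \<phi> [ly]"
  have car: "\<And>x. reduced x \<Longrightarrow> reduced (\<phi> x)"
    using assms(4) by (auto simp: iso_def hom_def FG_simps)
  have ab: "reduced a" "reduced b" unfolding a_def b_def using car by simp_all
  have ru: "reduced u" "reduced v" using assms(1,2) by (simp_all add: FG_simps)
  have eq: "\<And>w. reduced w \<Longrightarrow> \<phi> w = img a b w" unfolding a_def b_def using phi_img assms(4) by blast
  have sj: "surjw a b" unfolding surjw_def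
  proof (intro allI impI)
    fix z :: word assume z: "reduced z"
    have "\<phi> ` carrier FG = carrier FG" using assms(4) by (simp add: iso_def bij_betw_def)
    then obtain w where "w \<in> carrier FG" "\<phi> w = z" using z by (metis FG_simps(1) imageE mem_Collect_eq)
    thus "\<exists>w. img a b w = z" using eq by (metis FG_simps(1) mem_Collect_eq)
  qed
  have s1: "ac_equiv (imgp a b (u, v)) (imgp a b AK3)" using ac_equiv_img[OF ab assms(3)] .
  have "imgp a b (u, v) = (\<phi> u, \<phi> v)" using eq ru by (simp add: imgp_def)
  thus ?thesis using s1 main[OF ab sj] ac_trans by metis
qed

end
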